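(* Let $p>2$ be a prime and let $(A,+,\circ)$ be a strongly nilpotent brace of cardinality $p^n$ and nilpotency index $k$, where $k<p$ and $n+1<p$. Let $\gamma$ be a primitive root modulo $p^p$, $\xi=\gamma^{p^{p-1}}$, and define $a\cdot b=\sum_{i=0}^{p-2}\xi^{p-1-i}((\xi^i a)*b)$. Then for all $a,b,c\in A$, $$(a\cdot b)\cdot c-a\cdot(b\cdot c)=(b\cdot a)\cdot c-b\cdot(a\cdot c),$$ so (together with biadditivity of $\cdot$) $(A,+,\cdot)$ is a pre-Lie ring.
   Context: A (left) brace is a set $A$ with binary operations $+,\circ$ such that $(A,+)$ is an abelian group, $(A,\circ)$ is a group, and $a\circ(b+c)+a=a\circ b+a\circ c$ for all $a,b,c$. Write $a*b=a\circ b-a-b$. For additive subgroups $X,Y$, $X*Y$ is the additive subgroup generated by all $x*y$. Set $A^{[1]}=A$, $A^{[i+1]}=\sum_{j=1}^{i}A^{[j]}*A^{[i+1-j]}$. The brace is strongly nilpotent if $A^{[m]}=0$ for some $m$ and has nilpotency index $k$ if $A^{[k]}=0\neq A^{[k-1]}$. $ma$ denotes the $m$-fold additive multiple. A pre-Lie ring is an abelian group with a biadditive product satisfying the displayed identity. *)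

theory Defs
  imports "HOL-Number_Theory.Residue_Primitive_Roots"
begin

text \<open>A (left) brace on the whole type 'a: (UNIV,+) is the abelian group given by the type class
  ab_group_add, and circ is a second operation making UNIV a group and satisfying the brace law.\<close>

definition is_group_op :: "('a \<Rightarrow> 'a \<Rightarrow> 'a) \<Rightarrow> bool" where
  "is_group_op f \<longleftrightarrow> (\<forall>a b c. f (f a b) c = f a (f b c)) \<and>
     (\<exists>e. (\<forall>a. f e a = a \<and> f a e = a) \<and> (\<forall>a. \<exists>b. f a b = e \<and> f b a = e))"

definition brace :: "('a::ab_group_add \<Rightarrow> 'a \<Rightarrow> 'a) \<Rightarrow> bool" where
  "brace circ \<longleftrightarrow> is_group_op circ \<and>
     (\<forall>a b c. circ a (b + c) + a = circ a b + circ a c)"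

definition bstar :: "('a::ab_group_add \<Rightarrow> 'a \<Rightarrow> 'a) \<Rightarrow> 'a \<Rightarrow> 'a \<Rightarrow> 'a" where
  "bstar circ a b = circ a b - a - b"

definition add_subgroup :: "'a::ab_group_add set \<Rightarrow> bool" where
  "add_subgroup H \<longleftrightarrow> 0 \<in> H \<and> (\<forall>x\<in>H. \<forall>y\<in>H. x + y \<in> H) \<and> (\<forall>x\<in>H. - x \<in> H)"

definition add_gen :: "'a::ab_group_add set \<Rightarrow> 'a set" where
  "add_gen S = \<Inter>{H. add_subgroup H \<and> S \<subseteq> H}"

definition set_star :: "('a::ab_group_add \<Rightarrow> 'a \<Rightarrow> 'a) \<Rightarrow> 'a set \<Rightarrow> 'a set \<Rightarrow> 'a set" where
  "set_star circ X Y = add_gen {bstar circ x y | x y. x \<in> X \<and> y \<in> Y}"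

text \<open>sp circ i = A^[i] for i \<ge> 1 (sp circ 0 = A is an unused dummy value).
  A sum of additive subgroups is the subgroup generated by their union.\<close>
function sp :: "('a::ab_group_add \<Rightarrow> 'a \<Rightarrow> 'a) \<Rightarrow> nat \<Rightarrow> 'a set" where
  "sp circ 0 = UNIV"
| "sp circ (Suc 0) = UNIV"
| "sp circ (Suc (Suc i)) =
     add_gen (\<Union>j\<in>{1..Suc i}. set_star circ (sp circ j) (sp circ (Suc (Suc i) - j)))"
  by pat_completeness auto
termination
  by (relation "measure (\<lambda>(c, i). i)") auto

definition strongly_nilpotent :: "('a::ab_group_add \<Rightarrow> 'a \<Rightarrow> 'a) \<Rightarrow> bool" where
  "strongly_nilpotent circ \<longleftrightarrow> (\<exists>m. sp circ m = {0})"

definition nilpotency_index :: "('a::ab_group_add \<Rightarrow> 'a \<Rightarrow> 'a) \<Rightarrow> nat \<Rightarrow> bool" where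
  "nilpotency_index circ k \<longleftrightarrow> sp circ k = {0} \<and> sp circ (k - 1) \<noteq> {0}"

fun nmul :: "nat \<Rightarrow> 'a::ab_group_add \<Rightarrow> 'a" where
  "nmul 0 a = 0"
| "nmul (Suc m) a = a + nmul m a"

definition dotp :: "nat \<Rightarrow> nat \<Rightarrow> ('a::ab_group_add \<Rightarrow> 'a \<Rightarrow> 'a) \<Rightarrow> 'a \<Rightarrow> 'a \<Rightarrow> 'a" where
  "dotp p \<xi> circ a b = (\<Sum>i = 0..p - 2. nmul (\<xi> ^ (p - 1 - i)) (bstar circ (nmul (\<xi> ^ i) a) b))"

end

theory Submission
  imports Defs "HOL-Computational_Algebra.Polynomial"
begin

lemma nmul_add_num: "nmul (a + b) x = nmul a x + nmul b x"
  by (induction a) (simp_all add: add.assoc)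

lemma nmul_zero[simp]: "nmul m (0::'a::ab_group_add) = 0"
  by (induction m) simp_all

lemma nmul_one[simp]: "nmul (Suc 0) x = x"
  by simp

lemma nmul_add: "nmul m (x + y) = nmul m x + nmul m (y::'a::ab_group_add)"
  by (induction m) (simp_all add: algebra_simps)

lemma nmul_neg: "nmul m (- x) = - nmul m (x::'a::ab_group_add)"
  by (induction m) (simp_all add: algebra_simps)

lemma nmul_diff: "nmul m (x - y) = nmul m x - nmul m (y::'a::ab_group_add)"
  using nmul_add[of m x "-y"] nmul_neg[of m y] by simp

lemma nmul_mult: "nmul (a * b) x = nmul a (nmul b x)"
  by (induction a) (simp_all add: nmul_add_num nmul_add)

lemma nmul_comm: "nmul a (nmul b x) = nmul b (nmul a x)"
  by (metis mult.commute nmul_mult)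

lemma nmul_sum: "nmul m (sum f A) = (\<Sum>i\<in>A. nmul m (f i))"
  by (induction A rule: infinite_finite_induct) (simp_all add: nmul_add)

lemma nmul_sum_list: "nmul m (sum_list xs) = sum_list (map (nmul m) xs)"
  by (induction xs) (simp_all add: nmul_add)

lemma nmul_sum_num: "nmul (sum f A) x = (\<Sum>i\<in>A. nmul (f i) x)"
  by (induction A rule: infinite_finite_induct) (simp_all add: nmul_add_num)

lemma nmul_hom:
  assumes "\<And>x y. h (x + y) = h x + h y"
  shows "h (nmul m x) = nmul m (h x)"
proof -
  have h0: "h 0 = 0" using assms[of 0 0] by simp
  show ?thesis by (induction m) (simp_all add: assms h0)
qed

lemma sum_const_nmul: "(\<Sum>y\<in>A. x) = nmul (card A) x"
  by (induction A rule: infinite_finite_induct) simp_all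

lemma nmul_card_zero:
  fixes x :: "'a::{ab_group_add,finite}"
  shows "nmul (card (UNIV::'a set)) x = 0"
proof -
  have inj: "inj (\<lambda>y::'a. y + x)" by (auto simp: inj_def)
  have surj: "range (\<lambda>y::'a. y + x) = UNIV"
    by (auto intro!: image_eqI[where x="_ - x"])
  have "(\<Sum>y\<in>(UNIV::'a set). y) = (\<Sum>y\<in>range (\<lambda>y::'a. y + x). y)" using surj by simp
  also have "\<dots> = (\<Sum>y\<in>UNIV. y + x)" by (subst sum.reindex[OF inj]) (simp add: comp_def)
  also have "\<dots> = (\<Sum>y\<in>UNIV. y) + nmul (card (UNIV::'a set)) x"
    by (simp add: sum.distrib sum_const_nmul)
  finally show ?thesis by simp
qed

lemma nmul_cong:
  assumes "\<And>y. nmul N y = (0::'a::ab_group_add)" and "[a = b] (mod N)"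
  shows "nmul a x = nmul b (x::'a)"
proof -
  have z: "nmul (N * q) x = 0" for q
    by (simp only: nmul_mult assms(1))
  have "nmul a x = nmul (N * (a div N) + a mod N) x" by simp
  also have "\<dots> = nmul (a mod N) x" by (simp only: nmul_add_num z) simp
  also have "\<dots> = nmul (b mod N) x" using assms(2) unfolding cong_def by simp
  also have "\<dots> = nmul (N * (b div N) + b mod N) x" by (simp only: nmul_add_num z) simp
  also have "\<dots> = nmul b x" by simp
  finally show ?thesis .
qed

section \<open>Number theory\<close>

lemma lift1:
  fixes x :: int
  assumes p: "prime (p::nat)" and j: "j \<ge> 1" and c: "[x = 1] (mod int p ^ j)"
  shows "[x ^ p = 1] (mod int p ^ Suc j)"
proof -
  have d1: "int p ^ j dvd x - 1" using c by (simp add: cong_iff_dvd_diff)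
  have "int p dvd int p ^ j" using j by (simp add: dvd_power)
  then have cp: "[x = 1] (mod int p)" using c cong_dvd_modulus by blast
  have "[(\<Sum>i<p. x ^ i) = (\<Sum>i<p. 1)] (mod int p)"
    by (intro cong_sum cong_pow[of x 1, simplified] cp)
  then have "[(\<Sum>i<p. x ^ i) = 0] (mod int p)"
    by (simp add: cong_def)
  then have d2: "int p dvd (\<Sum>i<p. x ^ i)" by (simp add: cong_0_iff)
  have "x ^ p - 1 = (x - 1) * (\<Sum>i<p. x ^ i)" by (rule power_diff_1_eq)
  moreover have "int p ^ j * int p dvd (x - 1) * (\<Sum>i<p. x ^ i)"
    using d1 d2 by (rule mult_dvd_mono)
  ultimately show ?thesis
    by (simp add: cong_iff_dvd_diff mult.commute)
qed

lemma liftm: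
  fixes x :: int
  assumes p: "prime (p::nat)" and c: "[x = 1] (mod int p)"
  shows "[x ^ (p ^ m) = 1] (mod int p ^ Suc m)"
proof (induction m)
  case 0 then show ?case using c by simp
next
  case (Suc m)
  have "[(x ^ (p ^ m)) ^ p = 1] (mod int p ^ Suc (Suc m))"
    by (rule lift1[OF p _ Suc]) simp
  then show ?case by (simp add: power_mult[symmetric] mult.commute)
qed

lemma xi_facts:
  assumes p: "prime p" "p > 2" and g: "residue_primroot (p ^ p) \<gamma>" and xi: "\<xi> = \<gamma> ^ (p ^ (p - 1))"
  shows xi_pow: "[\<xi> ^ (p - 1) = 1] (mod p ^ p)"
    and xi_ne: "\<And>e. 0 < e \<Longrightarrow> e < p - 1 \<Longrightarrow> \<not> [\<xi> ^ e = 1] (mod p)"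
proof -
  have cop: "coprime (p ^ p) \<gamma>" and ordg: "ord (p ^ p) \<gamma> = totient (p ^ p)"
    using g by (auto simp: residue_primroot_def)
  have tot: "totient (p ^ p) = p ^ (p - 1) * (p - 1)"
    using totient_prime_power[OF p(1)] p(2) by simp
  show xp: "[\<xi> ^ (p - 1) = 1] (mod p ^ p)"
  proof -
    have "\<xi> ^ (p - 1) = \<gamma> ^ (p ^ (p - 1) * (p - 1))" by (simp add: xi power_mult)
    moreover have "ord (p ^ p) \<gamma> dvd p ^ (p - 1) * (p - 1)" using ordg tot by simp
    ultimately show ?thesis using ord_divides'[of \<gamma> "p ^ (p - 1) * (p - 1)" "p ^ p"] by simp
  qed
  fix e assume e: "0 < e" "e < p - 1"
  show "\<not> [\<xi> ^ e = 1] (mod p)"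
  proof
    assume c: "[\<xi> ^ e = 1] (mod p)"
    have ndvd: "\<not> p dvd \<gamma>"
    proof
      assume "p dvd \<gamma>"
      moreover have "p dvd p ^ p" using p by (simp add: dvd_power prime_gt_0_nat)
      ultimately have "p dvd gcd (p ^ p) \<gamma>" by simp
      with cop p(1) show False by (simp add: prime_gt_1_nat)
    qed
    have f: "[\<gamma> ^ (p - 1) = 1] (mod p)" by (rule fermat_theorem[OF p(1) ndvd])
    have gp: "[\<gamma> ^ p = \<gamma>] (mod p)"
    proof -
      have "\<gamma> ^ p = \<gamma> ^ (p - 1) * \<gamma>"
        using p by (metis Suc_diff_1 power_Suc2 prime_gt_0_nat)
      also have "[\<dots> = 1 * \<gamma>] (mod p)" by (intro cong_mult f cong_refl)
      finally show ?thesis by simp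
    qed
    have gpm: "[\<gamma> ^ (p ^ m) = \<gamma>] (mod p)" for m
    proof (induction m)
      case 0 then show ?case by simp
    next
      case (Suc m)
      have "\<gamma> ^ (p ^ Suc m) = (\<gamma> ^ (p ^ m)) ^ p" by (simp add: power_mult[symmetric] mult.commute)
      also have "[\<dots> = \<gamma> ^ p] (mod p)" by (intro cong_pow Suc)
      finally show ?case using gp cong_trans by blast
    qed
    have "\<xi> ^ e = (\<gamma> ^ (p ^ (p - 1))) ^ e" by (simp add: xi)
    also have "[\<dots> = \<gamma> ^ e] (mod p)" by (intro cong_pow gpm)
    finally have "[\<gamma> ^ e = 1] (mod p)" using c by (meson cong_sym cong_trans)
    then have "[int (\<gamma> ^ e) = 1] (mod int p)" using cong_int_iff[of "\<gamma>^e" 1 p] by simp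
    from liftm[OF p(1) this, of "p - 1"]
    have "[int (\<gamma> ^ e) ^ (p ^ (p - 1)) = 1] (mod int p ^ p)"
      using p by (simp add: prime_gt_0_nat)
    then have "[int (\<gamma> ^ (e * p ^ (p - 1))) = int 1] (mod int (p ^ p))"
      by (simp add: power_mult)
    then have "[\<gamma> ^ (e * p ^ (p - 1)) = 1] (mod p ^ p)" by (simp only: cong_int_iff)
    then have "ord (p ^ p) \<gamma> dvd e * p ^ (p - 1)" using ord_divides' by simp
    then have "p ^ (p - 1) * (p - 1) dvd p ^ (p - 1) * e" using ordg tot by (simp add: mult.commute)
    then have "p - 1 dvd e" using p by (simp add: prime_gt_0_nat)
    then show False using e by (simp add: dvd_imp_le leD)
  qed
qed

lemma geo_zero:
  assumes p: "prime p" and y1: "[y ^ (p - 1) = 1] (mod p ^ p)" and y2: "\<not> [y = 1] (mod p)"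
  shows "[(\<Sum>i<p - 1. y ^ i) = 0] (mod p ^ p)"
proof -
  have i1: "[int y ^ (p - 1) = 1] (mod int p ^ p)"
    using y1 cong_int_iff[of "y ^ (p-1)" 1 "p^p"] by simp
  have i2: "\<not> int p dvd (int y - 1)"
    using y2 cong_int_iff[of y 1 p] by (simp add: cong_iff_dvd_diff)
  have cp: "coprime (int p ^ p) (int y - 1)"
    using prime_imp_coprime[OF _ i2] p by (simp add: prime_nat_iff_prime)
  have "int p ^ p dvd int y ^ (p - 1) - 1" using i1 by (simp add: cong_iff_dvd_diff)
  also have "int y ^ (p - 1) - 1 = (int y - 1) * (\<Sum>i<p - 1. int y ^ i)" by (rule power_diff_1_eq)
  finally have "int p ^ p dvd (\<Sum>i<p - 1. int y ^ i)"
    using cp coprime_dvd_mult_right_iff by blast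
  then have "int (p ^ p) dvd int (\<Sum>i<p - 1. y ^ i)" by simp
  then show ?thesis by (simp only: int_dvd_int_iff cong_0_iff)
qed

lemma SL:
  assumes p: "prime p" "p > 2"
    and xp: "[\<xi> ^ (p - 1) = 1] (mod p ^ p)"
    and xn: "\<And>e. 0 < e \<Longrightarrow> e < p - 1 \<Longrightarrow> \<not> [\<xi> ^ e = 1] (mod p)"
    and a: "\<alpha> \<le> p - 2"
  shows "[(\<Sum>i=0..p-2. \<xi> ^ (p - 1 - i) * (\<xi> ^ i) ^ \<alpha>) = (if \<alpha> = 1 then p - 1 else 0)] (mod p ^ p)"
proof -
  have rng: "{0..p-2} = {..<p-1}" using p by auto
  show ?thesis
  proof (cases "\<alpha> = 0")
    case True
    have "(\<Sum>i<p-1. \<xi> ^ (p - 1 - i)) = (\<Sum>i<p-1. \<xi> ^ ((p - 1) - Suc i + 1))"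
      by (intro sum.cong refl, rule arg_cong[where f="(^) \<xi>"]) auto
    also have "\<dots> = (\<Sum>i<p-1. \<xi> ^ (i + 1))" by (rule sum.nat_diff_reindex)
    also have "\<dots> = \<xi> * (\<Sum>i<p-1. \<xi> ^ i)" by (simp add: sum_distrib_left)
    also have "[\<dots> = \<xi> * 0] (mod p ^ p)"
    proof (intro cong_mult cong_refl geo_zero[OF p(1)])
      show "[\<xi> ^ (p - 1) = 1] (mod p ^ p)" by (rule xp)
      show "\<not> [\<xi> = 1] (mod p)" using xn[of 1] p by simp
    qed
    finally show ?thesis using True rng by simp
  next
    case False
    have eq: "\<xi> ^ (p - 1 - i) * (\<xi> ^ i) ^ \<alpha> = \<xi> ^ (p - 1) * (\<xi> ^ (\<alpha> - 1)) ^ i" if "i < p - 1" for i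
    proof -
      have ee: "p - 1 - i + i * \<alpha> = (p - 1) + (\<alpha> - 1) * i"
        using that False by (cases \<alpha>) (auto simp: algebra_simps)
      have "\<xi> ^ (p - 1 - i) * (\<xi> ^ i) ^ \<alpha> = \<xi> ^ (p - 1 - i + i * \<alpha>)"
        by (simp add: power_add power_mult)
      also have "\<dots> = \<xi> ^ ((p - 1) + (\<alpha> - 1) * i)" by (simp only: ee)
      also have "\<dots> = \<xi> ^ (p - 1) * (\<xi> ^ (\<alpha> - 1)) ^ i" by (simp add: power_add power_mult)
      finally show ?thesis .
    qed
    have "(\<Sum>i<p-1. \<xi> ^ (p - 1 - i) * (\<xi> ^ i) ^ \<alpha>) = (\<Sum>i<p-1. \<xi> ^ (p - 1) * (\<xi> ^ (\<alpha> - 1)) ^ i)"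
      by (intro sum.cong refl eq) simp
    also have "[\<dots> = (\<Sum>i<p-1. 1 * (\<xi> ^ (\<alpha> - 1)) ^ i)] (mod p ^ p)"
      by (intro cong_sum cong_mult xp cong_refl)
    finally have c1: "[(\<Sum>i<p-1. \<xi> ^ (p - 1 - i) * (\<xi> ^ i) ^ \<alpha>) = (\<Sum>i<p-1. (\<xi> ^ (\<alpha> - 1)) ^ i)] (mod p ^ p)"
      by simp
    show ?thesis
    proof (cases "\<alpha> = 1")
      case True then show ?thesis using c1 rng by simp
    next
      case F2: False
      have "[(\<Sum>i<p-1. (\<xi> ^ (\<alpha> - 1)) ^ i) = 0] (mod p ^ p)"
      proof (rule geo_zero[OF p(1)])
        have "(\<xi> ^ (\<alpha> - 1)) ^ (p - 1) = (\<xi> ^ (p - 1)) ^ (\<alpha> - 1)"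
          by (simp add: power_mult[symmetric] mult.commute)
        also have "[\<dots> = 1 ^ (\<alpha> - 1)] (mod p ^ p)" by (intro cong_pow xp)
        finally show "[(\<xi> ^ (\<alpha> - 1)) ^ (p - 1) = 1] (mod p ^ p)" by simp
        show "\<not> [\<xi> ^ (\<alpha> - 1) = 1] (mod p)" using xn[of "\<alpha> - 1"] False F2 a p by simp
      qed
      then show ?thesis using c1 rng F2 cong_trans by auto
    qed
  qed
qed

section \<open>Additive subgroups\<close>

lemma add_gen_subgroup: "add_subgroup (add_gen S)"
  unfolding add_gen_def add_subgroup_def by auto

lemma add_gen_incl: "S \<subseteq> add_gen S"
  unfolding add_gen_def by auto

lemma add_gen_least: "add_subgroup H \<Longrightarrow> S \<subseteq> H \<Longrightarrow> add_gen S \<subseteq> H"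
  unfolding add_gen_def by auto

locale BR =
  fixes circ :: "'a::ab_group_add \<Rightarrow> 'a \<Rightarrow> 'a" and k :: nat
  assumes br: "brace circ" and nil: "sp circ k = {0}"
begin

abbreviation W where "W \<equiv> sp circ"
abbreviation st where "st \<equiv> bstar circ"

lemma assoc: "circ (circ a b) c = circ a (circ b c)"
  using br unfolding brace_def is_group_op_def by blast

lemma ldist: "circ a (b + c) = circ a b + circ a c - a"
  using br unfolding brace_def by (metis add_diff_cancel)

lemma circ_0_right[simp]: "circ a 0 = a"
  using ldist[of a 0 0] by (simp add: algebra_simps)

lemma ex_id: "\<exists>e. (\<forall>a. circ e a = a \<and> circ a e = a) \<and> (\<forall>a. \<exists>b. circ a b = e \<and> circ b a = e)"
  using br unfolding brace_def is_group_op_def by blast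

lemma circ_0_left[simp]: "circ 0 a = a"
proof -
  obtain e where e: "\<forall>a. circ e a = a \<and> circ a e = a" using ex_id by blast
  then have "e = 0" using circ_0_right[of e] by metis
  with e show ?thesis by simp
qed

lemma ex_inv: "\<exists>b. circ a b = 0 \<and> circ b a = 0"
proof -
  obtain e where e: "(\<forall>a. circ e a = a \<and> circ a e = a) \<and> (\<forall>a. \<exists>b. circ a b = e \<and> circ b a = e)"
    using ex_id by blast
  then have "e = 0" using circ_0_right[of e] by metis
  with e show ?thesis by blast
qed

lemma st_def': "st a b = circ a b - a - b"
  by (simp add: bstar_def)

lemma circ_st: "circ a b = a + b + st a b"
  by (simp add: bstar_def)

lemma st_add_right: "st a (b + c) = st a b + st a c"
  by (simp add: bstar_def ldist algebra_simps)

lemma st_zero_right[simp]: "st a 0 = 0"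
  by (simp add: bstar_def)

lemma st_zero_left[simp]: "st 0 a = 0"
  by (simp add: bstar_def)

lemma st_neg_right: "st a (- b) = - st a b"
proof -
  have "st a b + st a (- b) = 0" using st_add_right[of a b "-b"] by simp
  then show ?thesis by (metis neg_eq_iff_add_eq_0)
qed

lemma st_diff_right: "st a (b - c) = st a b - st a c"
  using st_add_right[of a b "-c"] st_neg_right[of a c] by simp

lemma st_nmul_right: "st a (nmul m b) = nmul m (st a b)"
  by (rule nmul_hom) (rule st_add_right)

lemma st_sum_list_right: "st a (sum_list xs) = sum_list (map (st a) xs)"
  by (induction xs) (simp_all add: st_add_right)

lemma st_sum_right: "st a (sum f A) = (\<Sum>i\<in>A. st a (f i))"
  by (induction A rule: infinite_finite_induct) (simp_all add: st_add_right)

lemma st_circ_left: "st (circ a b) c = st a (st b c) + st a c + st b c"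
proof -
  have "circ (circ a b) c = circ a (circ b c)" by (rule assoc)
  also have "circ b c = b + c + st b c" by (rule circ_st)
  also have "circ a (b + c + st b c) = circ a b + circ a c + circ a (st b c) - a - a"
    by (simp add: ldist)
  finally have "circ (circ a b) c = circ a b + circ a c + circ a (st b c) - a - a" .
  then show ?thesis by (simp add: bstar_def algebra_simps)
qed

section \<open>Filtration\<close>

lemma W0[simp]: "W 0 = UNIV" and W1[simp]: "W (Suc 0) = UNIV"
  by simp_all

lemma W_sub: "add_subgroup (W i)"
proof (cases i)
  case 0 then show ?thesis by (simp add: add_subgroup_def)
next
  case (Suc j) then show ?thesis
  proof (cases j)
    case 0 then show ?thesis using Suc by (simp add: add_subgroup_def)
  next
    case (Suc m) then show ?thesis using \<open>i = Suc j\<close> by (simp only: sp.simps add_gen_subgroup)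
  qed
qed

lemma W_zero[simp]: "0 \<in> W i" using W_sub unfolding add_subgroup_def by blast
lemma W_add: "x \<in> W i \<Longrightarrow> y \<in> W i \<Longrightarrow> x + y \<in> W i"
  using W_sub unfolding add_subgroup_def by blast
lemma W_neg: "x \<in> W i \<Longrightarrow> - x \<in> W i"
  using W_sub unfolding add_subgroup_def by blast
lemma W_diff: "x \<in> W i \<Longrightarrow> y \<in> W i \<Longrightarrow> x - y \<in> W i"
  using W_add[of x i "-y"] W_neg[of y i] by simp
lemma W_nmul: "x \<in> W i \<Longrightarrow> nmul m x \<in> W i"
  by (induction m) (simp_all add: W_add)
lemma W_sum: "(\<And>j. j \<in> A \<Longrightarrow> f j \<in> W i) \<Longrightarrow> sum f A \<in> W i"
  by (induction A rule: infinite_finite_induct) (simp_all add: W_add)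
lemma W_sum_list: "(\<And>x. x \<in> set xs \<Longrightarrow> x \<in> W i) \<Longrightarrow> sum_list xs \<in> W i"
  by (induction xs) (simp_all add: W_add)

lemma W_star1:
  assumes "x \<in> W i" "y \<in> W j" "1 \<le> i" "1 \<le> j"
  shows "st x y \<in> W (i + j)"
proof -
  define m where "m = i + j - 2"
  have m: "i + j = Suc (Suc m)" using assms(3,4) unfolding m_def by arith
  have "st x y \<in> {bstar circ x y |x y. x \<in> W i \<and> y \<in> W j}" using assms(1,2) by blast
  then have s1: "st x y \<in> set_star circ (W i) (W j)"
    unfolding set_star_def using add_gen_incl by (rule subsetD[rotated])
  have im: "i \<in> {1..Suc m}" using m assms(3,4) by simp
  have jm: "Suc (Suc m) - i = j" using m by arith
  have "set_star circ (W i) (W (Suc (Suc m) - i)) \<subseteq> (\<Union>l\<in>{1..Suc m}. set_star circ (W l) (W (Suc (Suc m) - l)))"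
    by (rule UN_upper[OF im])
  also have "\<dots> \<subseteq> add_gen (\<Union>l\<in>{1..Suc m}. set_star circ (W l) (W (Suc (Suc m) - l)))"
    by (rule add_gen_incl)
  also have "\<dots> = W (Suc (Suc m))" by (simp only: sp.simps)
  finally have "set_star circ (W i) (W j) \<subseteq> W (Suc (Suc m))" by (simp only: jm)
  with s1 have "st x y \<in> W (Suc (Suc m))" by (rule subsetD[rotated])
  then show ?thesis by (simp only: m)
qed

lemma W_anti: "W (Suc i) \<subseteq> W i"
proof (induction i rule: less_induct)
  case (less i)
  show ?case
  proof (cases i)
    case 0 then show ?thesis by simp
  next
    case (Suc j)
    show ?thesis
    proof (cases j)
      case 0 then show ?thesis using Suc by simp
    next
      case (Suc m)
      have ij: "i = Suc (Suc m)" using Suc \<open>i = Suc j\<close> by simp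
      have gen: "set_star circ (W l) (W (Suc (Suc (Suc m)) - l)) \<subseteq> W (Suc (Suc m))"
        if l: "l \<in> {1..Suc (Suc m)}" for l
        unfolding set_star_def
      proof (rule add_gen_least[OF W_sub], safe)
        fix x y assume x: "x \<in> W l" and y: "y \<in> W (Suc (Suc (Suc m)) - l)"
        show "st x y \<in> W (Suc (Suc m))"
        proof (cases "l \<le> Suc m")
          case True
          have "Suc (Suc (Suc m)) - l = Suc (Suc (Suc m) - l)" using True by simp
          moreover have "Suc (Suc m) - l < i" using l ij by auto
          ultimately have "y \<in> W (Suc (Suc m) - l)" using less y by auto
          from W_star1[OF x this] l True have "st x y \<in> W (l + (Suc (Suc m) - l))" by auto
          then show ?thesis using True by simp
        next
          case False
          then have "l = Suc (Suc m)" using l by simp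
          then have "x \<in> W (Suc m)" using less[of "Suc m"] x ij by auto
          from W_star1[OF this, of y 1] y show ?thesis by simp
        qed
      qed
      have "W (Suc i) = add_gen (\<Union>l\<in>{1..Suc (Suc m)}. set_star circ (W l) (W (Suc (Suc (Suc m)) - l)))"
        using ij by simp
      also have "\<dots> \<subseteq> W (Suc (Suc m))"
        by (rule add_gen_least[OF W_sub]) (use gen in blast)
      finally show ?thesis using ij by simp
    qed
  qed
qed

lemma W_mono: "i \<le> j \<Longrightarrow> W j \<subseteq> W i"
  by (induction j rule: dec_induct) (use W_anti in auto)

lemma W_monoD: "x \<in> W j \<Longrightarrow> i \<le> j \<Longrightarrow> x \<in> W i"
  using W_mono by blast

lemma W_star: "x \<in> W i \<Longrightarrow> y \<in> W j \<Longrightarrow> st x y \<in> W (i + j)"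
proof -
  assume x: "x \<in> W i" and y: "y \<in> W j"
  have x': "x \<in> W (max i 1)" using x by (cases i) auto
  have y': "y \<in> W (max j 1)" using y by (cases j) auto
  have "st x y \<in> W (max i 1 + max j 1)" by (rule W_star1[OF x' y']) auto
  then show ?thesis by (rule W_monoD) simp
qed

lemma W_big: "k \<le> j \<Longrightarrow> x \<in> W j \<Longrightarrow> x = 0"
  using W_mono[of k j] nil by auto

lemma st_W1: "y \<in> W j \<Longrightarrow> st x y \<in> W (Suc j)"
  using W_star[of x 1 y j] by simp

end

lemma fact_choose_prod:
  "int (fact j * (m choose j)) = (\<Prod>i<j. int m - int i)"
proof -
  have "real_of_int (int (fact j * (m choose j))) = fact j * (real m gchoose j)"
    by (simp add: binomial_gbinomial)
  also have "\<dots> = (\<Prod>i = 0..<j. real m - of_nat i)" by (rule gbinomial_mult_fact)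
  also have "\<dots> = real_of_int (\<Prod>i<j. int m - int i)" by (simp add: atLeast0LessThan)
  finally show ?thesis by (simp only: of_int_eq_iff)
qed

lemma stir:
  assumes N: "N > 0" and j: "j \<ge> 1"
  shows "\<exists>c. \<forall>m. [fact j * (m choose j) = (\<Sum>i\<in>{1..j}. c i * m ^ i)] (mod N)"
proof -
  define q :: "int poly" where "q = (\<Prod>i<j. [:- int i, 1:])"
  have pq: "poly q x = (\<Prod>i<j. x - int i)" for x by (simp add: q_def poly_prod)
  have dq: "degree q \<le> j"
  proof -
    have "degree q \<le> sum (degree \<circ> (\<lambda>i. [:- int i, 1:])) {..<j}"
      unfolding q_def by (rule degree_prod_sum_le) simp
    also have "\<dots> = j" by simp
    finally show ?thesis .
  qed
  have c0: "coeff q 0 = 0"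
  proof -
    have "coeff q 0 = poly q 0" by (simp add: poly_0_coeff_0)
    also have "\<dots> = 0" unfolding pq using j by (subst prod_zero_iff) auto
    finally show ?thesis .
  qed
  have ex: "int (fact j * (m choose j)) = (\<Sum>i\<in>{1..j}. coeff q i * int m ^ i)" for m
  proof -
    have "int (fact j * (m choose j)) = poly q (int m)" by (simp only: fact_choose_prod pq)
    also have "\<dots> = (\<Sum>i\<le>degree q. coeff q i * int m ^ i)" by (rule poly_altdef)
    also have "\<dots> = (\<Sum>i\<le>j. coeff q i * int m ^ i)"
      by (rule sum.mono_neutral_left) (use dq in \<open>auto simp: coeff_eq_0\<close>)
    also have "{..j} = insert 0 {1..j}" by auto
    also have "(\<Sum>i\<in>insert 0 {1..j}. coeff q i * int m ^ i) = (\<Sum>i\<in>{1..j}. coeff q i * int m ^ i)"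
      by (simp add: c0)
    finally show ?thesis .
  qed
  define c where "c i = nat (coeff q i mod int N)" for i
  have cc: "[coeff q i = int (c i)] (mod int N)" for i
    unfolding c_def using N by (simp add: cong_def)
  have "[int (fact j * (m choose j)) = int (\<Sum>i\<in>{1..j}. c i * m ^ i)] (mod int N)" for m
  proof -
    have "[(\<Sum>i\<in>{1..j}. coeff q i * int m ^ i) = (\<Sum>i\<in>{1..j}. int (c i) * int m ^ i)] (mod int N)"
      by (intro cong_sum cong_mult cc cong_refl)
    then show ?thesis using ex[of m] by simp
  qed
  then show ?thesis by (auto simp only: cong_int_iff)
qed

definition ev :: "(nat \<times> nat \<times> 'a::ab_group_add) list \<Rightarrow> nat \<Rightarrow> nat \<Rightarrow> 'a" where
  "ev L s t = sum_list (map (\<lambda>(a, b, g). nmul (s ^ a * t ^ b) g) L)"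

lemma ev_Nil[simp]: "ev [] s t = 0" by (simp add: ev_def)
lemma ev_Cons[simp]: "ev ((a, b, g) # L) s t = nmul (s ^ a * t ^ b) g + ev L s t"
  by (simp add: ev_def)
lemma ev_append[simp]: "ev (L1 @ L2) s t = ev L1 s t + ev L2 s t"
  by (simp add: ev_def)

lemma ev_hom:
  assumes "\<And>x y. h (x + y) = h x + h y"
  shows "h (ev L s t) = ev (map (\<lambda>(a, b, g). (a, b, h g)) L) s t"
proof -
  have h0: "h 0 = 0" using assms[of 0 0] by simp
  show ?thesis
    by (induction L) (auto simp: assms h0 nmul_hom[of h, OF assms])
qed

definition addc :: "(nat \<Rightarrow> nat \<Rightarrow> bool) \<Rightarrow> bool" where
  "addc S \<longleftrightarrow> (\<forall>a b a' b'. S a b \<longrightarrow> S a' b' \<longrightarrow> S (a + a') (b + b'))"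

lemma addc_mult:
  assumes "addc S" "S a b" "i \<ge> 1"
  shows "S (i * a) (i * b)"
  using assms(3)
proof (induction i rule: dec_induct)
  case base then show ?case using assms(2) by simp
next
  case (step i)
  then show ?case using assms(1,2) unfolding addc_def by (simp add: add.commute)
qed

context BR
begin

definition okL :: "nat \<Rightarrow> nat \<Rightarrow> (nat \<Rightarrow> nat \<Rightarrow> bool) \<Rightarrow> (nat \<times> nat \<times> 'a) list \<Rightarrow> bool" where
  "okL e \<mu> S L \<longleftrightarrow> (\<forall>(a, b, g)\<in>set L. S a b \<and> g \<in> W (e + a + b) \<and> g \<in> W \<mu>)"

definition PF :: "nat \<Rightarrow> nat \<Rightarrow> (nat \<Rightarrow> nat \<Rightarrow> bool) \<Rightarrow> (nat \<Rightarrow> nat \<Rightarrow> 'a) \<Rightarrow> bool" where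
  "PF e \<mu> S F \<longleftrightarrow> (\<exists>L. (\<forall>s t. F s t = ev L s t) \<and> okL e \<mu> S L)"

lemma okL_Nil[simp]: "okL e \<mu> S []" by (simp add: okL_def)
lemma okL_Cons[simp]: "okL e \<mu> S ((a, b, g) # L) \<longleftrightarrow> S a b \<and> g \<in> W (e + a + b) \<and> g \<in> W \<mu> \<and> okL e \<mu> S L"
  by (simp add: okL_def)
lemma okL_append[simp]: "okL e \<mu> S (L1 @ L2) \<longleftrightarrow> okL e \<mu> S L1 \<and> okL e \<mu> S L2"
  by (simp only: okL_def set_append ball_Un)

lemma PF_I: "okL e \<mu> S L \<Longrightarrow> (\<And>s t. F s t = ev L s t) \<Longrightarrow> PF e \<mu> S F"
  unfolding PF_def by blast

lemma PF_ev: "okL e \<mu> S L \<Longrightarrow> PF e \<mu> S (ev L)"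
  unfolding PF_def by blast

lemma PF_zero: "PF e \<mu> S (\<lambda>s t. 0)"
  by (rule PF_I[of _ _ _ "[]"]) simp_all

lemma PF_cong: "PF e \<mu> S F \<Longrightarrow> (\<And>s t. G s t = F s t) \<Longrightarrow> PF e \<mu> S G"
  unfolding PF_def by auto

lemma PF_add:
  assumes "PF e \<mu> S F" "PF e \<mu> S G"
  shows "PF e \<mu> S (\<lambda>s t. F s t + G s t)"
proof -
  obtain L1 where 1: "\<And>s t. F s t = ev L1 s t" "okL e \<mu> S L1" using assms(1) unfolding PF_def by blast
  obtain L2 where 2: "\<And>s t. G s t = ev L2 s t" "okL e \<mu> S L2" using assms(2) unfolding PF_def by blast
  show ?thesis by (rule PF_I[of _ _ _ "L1 @ L2"]) (simp_all add: 1 2)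
qed

lemma PF_map:
  assumes "PF e \<mu> S F" and hom: "\<And>x y. h (x + y) = h x + h y"
    and hW: "\<And>x i. x \<in> W i \<Longrightarrow> h x \<in> W (i + r)"
    and "e' \<le> e + r" "\<mu>' \<le> \<mu> + r"
  shows "PF e' \<mu>' S (\<lambda>s t. h (F s t))"
proof -
  obtain L where 1: "\<And>s t. F s t = ev L s t" "okL e \<mu> S L" using assms(1) unfolding PF_def by blast
  have "okL e' \<mu>' S (map (\<lambda>(a, b, g). (a, b, h g)) L)"
    using 1(2)
  proof (induction L)
    case (Cons x L)
    obtain a b g where x: "x = (a, b, g)" by (cases x)
    have "g \<in> W (e + a + b)" "g \<in> W \<mu>" using Cons.prems x by auto
    then have "h g \<in> W (e' + a + b)" "h g \<in> W \<mu>'"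
      using hW[of g "e + a + b"] hW[of g \<mu>] assms(4,5) W_monoD by (auto simp: algebra_simps)
    then show ?case using Cons x by auto
  qed simp
  then show ?thesis by (rule PF_I) (simp add: 1 ev_hom[of h, OF hom])
qed

lemma PF_neg: "PF e \<mu> S F \<Longrightarrow> PF e \<mu> S (\<lambda>s t. - F s t)"
proof -
  assume a: "PF e \<mu> S F"
  show ?thesis using PF_map[OF a, of uminus 0 e \<mu>] W_neg by simp
qed

lemma PF_diff: "PF e \<mu> S F \<Longrightarrow> PF e \<mu> S G \<Longrightarrow> PF e \<mu> S (\<lambda>s t. F s t - G s t)"
  using PF_add[of e \<mu> S F "\<lambda>s t. - G s t"] PF_neg[of e \<mu> S G] by simp

lemma PF_sum:
  assumes "finite A" "\<And>i. i \<in> A \<Longrightarrow> PF e \<mu> S (F i)"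
  shows "PF e \<mu> S (\<lambda>s t. \<Sum>i\<in>A. F i s t)"
  using assms by (induction A rule: finite_induct) (simp_all add: PF_zero PF_add)

lemma okL_mono:
  assumes "okL e \<mu> S L" "e' \<le> e" "\<mu>' \<le> \<mu>" "\<And>a b. S a b \<Longrightarrow> S' a b"
  shows "okL e' \<mu>' S' L"
  using assms(1)
proof (induction L)
  case (Cons x L)
  obtain a b g where x: "x = (a, b, g)" by (cases x)
  have "S a b" "g \<in> W (e + a + b)" "g \<in> W \<mu>" using Cons.prems x by auto
  then have "S' a b" "g \<in> W (e' + a + b)" "g \<in> W \<mu>'" using assms(2-4) W_monoD by auto
  then show ?case using Cons x by auto
qed simp

lemma PF_mono:
  assumes "PF e \<mu> S F" "e' \<le> e" "\<mu>' \<le> \<mu>" "\<And>a b. S a b \<Longrightarrow> S' a b"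
  shows "PF e' \<mu>' S' F"
proof -
  obtain L where 1: "\<And>s t. F s t = ev L s t" "okL e \<mu> S L" using assms(1) unfolding PF_def by blast
  have "okL e' \<mu>' S' L" by (rule okL_mono[OF 1(2) assms(2,3)]) (rule assms(4))
  then show ?thesis by (rule PF_I) (rule 1(1))
qed

lemma PF_single:
  assumes "S a b" "g \<in> W (e + a + b)" "g \<in> W \<mu>"
  shows "PF e \<mu> S (\<lambda>s t. nmul (s ^ a * t ^ b) g)"
  by (rule PF_I[of _ _ _ "[(a, b, g)]"]) (simp_all add: assms)

lemma PF_shift:
  assumes "PF E \<mu> S F" "E = e + a + b" "\<And>a' b'. S a' b' \<Longrightarrow> S' (a' + a) (b' + b)"
  shows "PF e \<mu> S' (\<lambda>s t. nmul (s ^ a * t ^ b) (F s t))"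
proof -
  obtain L where 1: "\<And>s t. F s t = ev L s t" "okL E \<mu> S L" using assms(1) unfolding PF_def by blast
  define L' where "L' = map (\<lambda>(a', b', g). (a' + a, b' + b, g)) L"
  have "okL e \<mu> S' L'" using 1(2) unfolding L'_def
  proof (induction L)
    case (Cons x L)
    obtain a' b' g where x: "x = (a', b', g)" by (cases x)
    have "S a' b'" "g \<in> W (E + a' + b')" "g \<in> W \<mu>" using Cons.prems x by auto
    moreover have "E + a' + b' = e + (a' + a) + (b' + b)" using assms(2) by simp
    ultimately have "S' (a' + a) (b' + b)" "g \<in> W (e + (a' + a) + (b' + b))" "g \<in> W \<mu>"
      using assms(3) by auto
    then show ?case using Cons x by auto
  qed simp
  moreover have "nmul (s ^ a * t ^ b) (ev L s t) = ev L' s t" for s t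
    unfolding L'_def
    by (induction L) (auto simp: nmul_add nmul_mult[symmetric] power_add algebra_simps)
  ultimately show ?thesis using 1(1) by (intro PF_I[of _ _ _ L']) simp_all
qed

lemma PF_big:
  assumes "PF e \<mu> S F" "k \<le> \<mu>"
  shows "F s t = 0"
proof -
  obtain L where 1: "\<And>s t. F s t = ev L s t" "okL e \<mu> S L" using assms(1) unfolding PF_def by blast
  have "ev L s t = 0" using 1(2)
  proof (induction L)
    case (Cons x L)
    obtain a b g where x: "x = (a, b, g)" by (cases x)
    have "g = 0" using W_big[OF assms(2)] Cons.prems x by auto
    then show ?case using Cons x by auto
  qed simp
  then show ?thesis using 1 by simp
qed

lemma PF_star:
  assumes hx: "\<And>g j1 j2. g \<in> W j1 \<Longrightarrow> g \<in> W j2 \<Longrightarrow> PF (ex + j1) (mx + j2) Sx (\<lambda>s t. st (X s t) g)"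
    and hz: "PF ez mz Sz Z"
    and hS: "\<And>a b a' b'. Sz a b \<Longrightarrow> Sx a' b' \<Longrightarrow> So (a' + a) (b' + b)"
  shows "PF (ex + ez) (mx + mz) So (\<lambda>s t. st (X s t) (Z s t))"
proof -
  obtain L where 1: "\<And>s t. Z s t = ev L s t" "okL ez mz Sz L" using hz unfolding PF_def by blast
  have "PF (ex + ez) (mx + mz) So (\<lambda>s t. st (X s t) (ev L s t))" using 1(2)
  proof (induction L)
    case Nil then show ?case by (simp add: PF_zero)
  next
    case (Cons x L)
    obtain a b g where x: "x = (a, b, g)" by (cases x)
    have g: "Sz a b" "g \<in> W (ez + a + b)" "g \<in> W mz" "okL ez mz Sz L" using Cons.prems x by auto
    have "PF (ex + (ez + a + b)) (mx + mz) Sx (\<lambda>s t. st (X s t) g)" by (rule hx[OF g(2,3)])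
    then have "PF (ex + ez) (mx + mz) So (\<lambda>s t. nmul (s ^ a * t ^ b) (st (X s t) g))"
      by (rule PF_shift) (simp_all add: hS g(1))
    then show ?case using Cons.IH[OF g(4)] x
      by (simp add: st_add_right st_nmul_right PF_add)
  qed
  then show ?thesis using 1 by simp
qed

end

lemma shift0:
  fixes F :: "nat \<Rightarrow> 'a::ab_group_add"
  assumes "F (Suc R) = 0"
  shows "(\<Sum>j\<le>R. nmul (m choose j) (F j)) = F 0 + (\<Sum>j\<le>R. nmul (m choose Suc j) (F (Suc j)))"
proof -
  have "(\<Sum>j\<le>Suc R. nmul (m choose j) (F j)) = (\<Sum>j\<le>R. nmul (m choose j) (F j))"
    using assms by simp
  moreover have "(\<Sum>j\<le>Suc R. nmul (m choose j) (F j)) = F 0 + (\<Sum>j\<le>R. nmul (m choose Suc j) (F (Suc j)))"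
    by (subst sum.atMost_Suc_shift) simp
  ultimately show ?thesis by simp
qed

lemma pascal_shift:
  fixes F :: "nat \<Rightarrow> 'a::ab_group_add"
  assumes "F (Suc R) = 0"
  shows "(\<Sum>j\<le>R. nmul (Suc m choose j) (F j)) = (\<Sum>j\<le>R. nmul (m choose j) (F j)) + (\<Sum>j\<le>R. nmul (m choose j) (F (Suc j)))"
proof -
  have "(\<Sum>j\<le>R. nmul (Suc m choose j) (F j)) = F 0 + (\<Sum>j\<le>R. nmul (Suc m choose Suc j) (F (Suc j)))"
    by (rule shift0[where F=F and R=R and m="Suc m", OF assms])
  also have "(\<Sum>j\<le>R. nmul (Suc m choose Suc j) (F (Suc j))) = (\<Sum>j\<le>R. nmul (m choose Suc j) (F (Suc j))) + (\<Sum>j\<le>R. nmul (m choose j) (F (Suc j)))"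
    by (simp add: nmul_add_num sum.distrib)
  also have "F 0 + (\<dots>) = (F 0 + (\<Sum>j\<le>R. nmul (m choose Suc j) (F (Suc j)))) + (\<Sum>j\<le>R. nmul (m choose j) (F (Suc j)))"
    by (simp add: add.assoc)
  also have "F 0 + (\<Sum>j\<le>R. nmul (m choose Suc j) (F (Suc j))) = (\<Sum>j\<le>R. nmul (m choose j) (F j))"
    by (rule shift0[where F=F and R=R and m=m, OF assms, symmetric])
  finally show ?thesis .
qed

locale BRT = BR +
  fixes N :: nat
  assumes tors: "\<And>x::'a. nmul N x = 0" and Npos: "N > 0"
    and factinv: "\<And>j. j < k \<Longrightarrow> coprime (fact j) N"
begin

lemma finv:
  assumes "j < k"
  shows "\<exists>u. \<forall>y::'a. nmul (fact j) (nmul u y) = y"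
proof -
  obtain u where u: "[fact j * u = Suc 0] (mod N)"
    using cong_solve_coprime_nat[OF factinv[OF assms]] by blast
  have "nmul (fact j) (nmul u y) = y" for y :: 'a
  proof -
    have "nmul (fact j) (nmul u y) = nmul (fact j * u) y" by (simp add: nmul_mult)
    also have "\<dots> = nmul (Suc 0) y" by (rule nmul_cong[where N=N]) (simp_all add: tors u)
    finally show ?thesis by simp
  qed
  then show ?thesis by blast
qed

lemma Lpow_W: "g \<in> W d \<Longrightarrow> c \<in> W w \<Longrightarrow> (st g ^^ i) c \<in> W (i * d + w)"
proof (induction i)
  case (Suc i)
  then have "st g ((st g ^^ i) c) \<in> W (d + (i * d + w))" by (intro W_star) simp_all
  then show ?case by (simp add: algebra_simps)
qed simp

lemma BIN:
  assumes S: "addc S" "S a b" and mu: "\<mu> \<ge> 1" and j0: "j0 \<ge> 1"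
    and hf: "\<And>j. j \<le> R \<Longrightarrow> f j \<in> W ((j + j0) * (e + a + b) + o1) \<and> f j \<in> W ((j + j0) * \<mu> + o2)"
  shows "PF (e + o1) (j0 * \<mu> + o2) S (\<lambda>s t. \<Sum>j\<le>R. nmul ((s ^ a * t ^ b) choose (j + j0)) (f j))"
proof (rule PF_sum, simp)
  fix j assume "j \<in> {..R}"
  then have fj: "f j \<in> W ((j + j0) * (e + a + b) + o1)" "f j \<in> W ((j + j0) * \<mu> + o2)" using hf by auto
  define J where "J = j + j0"
  have J1: "J \<ge> 1" "J \<ge> j0" using j0 by (simp_all add: J_def)
  show "PF (e + o1) (j0 * \<mu> + o2) S (\<lambda>s t. nmul ((s ^ a * t ^ b) choose (j + j0)) (f j))"
  proof (cases "k \<le> J")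
    case True
    have "J \<le> J * \<mu>" using mu by simp
    then have "k \<le> (j + j0) * \<mu> + o2" using True unfolding J_def by linarith
    then have "f j = 0" using W_big fj(2) by blast
    then show ?thesis by (simp add: PF_zero)
  next
    case False
    obtain u where u: "\<And>y::'a. nmul (fact J) (nmul u y) = y" using finv[of J] False by auto
    obtain c where c: "\<And>m. [fact J * (m choose J) = (\<Sum>i\<in>{1..J}. c i * m ^ i)] (mod N)"
      using stir[OF Npos J1(1)] by blast
    define y where "y = nmul u (f j)"
    have yW: "y \<in> W (J * (e + a + b) + o1)" "y \<in> W (J * \<mu> + o2)"
      using fj unfolding y_def J_def by (simp_all add: W_nmul)
    have eq: "nmul ((s ^ a * t ^ b) choose J) (f j) = (\<Sum>i\<in>{1..J}. nmul (s ^ (i * a) * t ^ (i * b)) (nmul (c i) y))"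
      for s t
    proof -
      have "nmul ((s ^ a * t ^ b) choose J) (f j) = nmul ((s ^ a * t ^ b) choose J) (nmul (fact J) y)"
        by (simp only: y_def u)
      also have "\<dots> = nmul (fact J * ((s ^ a * t ^ b) choose J)) y"
        by (simp only: nmul_mult[symmetric] mult.commute)
      also have "\<dots> = nmul (\<Sum>i\<in>{1..J}. c i * (s ^ a * t ^ b) ^ i) y"
        by (rule nmul_cong[where N=N]) (simp add: tors, rule c)
      also have "\<dots> = (\<Sum>i\<in>{1..J}. nmul (c i * (s ^ a * t ^ b) ^ i) y)"
        by (rule nmul_sum_num)
      also have "\<dots> = (\<Sum>i\<in>{1..J}. nmul (s ^ (i * a) * t ^ (i * b)) (nmul (c i) y))"
        by (intro sum.cong refl)
           (simp add: nmul_mult[symmetric] power_mult_distrib power_mult[symmetric] mult.commute)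
      finally show ?thesis .
    qed
    have "PF (e + o1) (j0 * \<mu> + o2) S (\<lambda>s t. \<Sum>i\<in>{1..J}. nmul (s ^ (i * a) * t ^ (i * b)) (nmul (c i) y))"
    proof (rule PF_sum, simp)
      fix i assume i: "i \<in> {1..J}"
      have Si: "S (i * a) (i * b)" using addc_mult[OF S] i by simp
      have le1: "e + o1 + i * a + i * b \<le> J * (e + a + b) + o1"
      proof -
        have 1: "e \<le> J * e" using J1 by simp
        have 2: "i * a \<le> J * a" "i * b \<le> J * b" using i by simp_all
        have 3: "J * (e + a + b) = J * e + J * a + J * b" by (simp add: algebra_simps)
        show ?thesis using 1 2 3 by linarith
      qed
      have le2: "j0 * \<mu> + o2 \<le> J * \<mu> + o2" using J1 by simp
      show "PF (e + o1) (j0 * \<mu> + o2) S (\<lambda>s t. nmul (s ^ (i * a) * t ^ (i * b)) (nmul (c i) y))"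
      proof (rule PF_single[where S=S and a="i * a" and b="i * b"])
        show "S (i * a) (i * b)" by (rule Si)
        show "nmul (c i) y \<in> W (e + o1 + i * a + i * b)"
          using W_nmul[OF yW(1)] le1 W_monoD by blast
        show "nmul (c i) y \<in> W (j0 * \<mu> + o2)"
          using W_nmul[OF yW(2)] le2 W_monoD by blast
      qed
    qed
    then show ?thesis using eq unfolding J_def by simp
  qed
qed

lemma circ_diff_right: "circ u (x - y) = circ u x - circ u y + u"
  using ldist[of u "x - y" y] by (simp add: algebra_simps)

lemma lam_circ: "circ (circ u v) c - circ u v = circ u (circ v c - v) - u"
  by (simp add: circ_diff_right assoc)

primrec pw :: "'a \<Rightarrow> nat \<Rightarrow> 'a" where
  "pw g 0 = 0"
| "pw g (Suc m) = circ g (pw g m)"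

lemma Lpow_big: "k \<le> R \<Longrightarrow> (st g ^^ R) c = 0"
  using Lpow_W[of g 1 c 0 R] W_big[of "R * 1 + 0"] by simp

lemma pw_lam:
  assumes R: "k \<le> R"
  shows "circ (pw g m) c - pw g m = (\<Sum>j\<le>R. nmul (m choose j) ((st g ^^ j) c))"
proof (induction m)
  case 0
  have "(\<Sum>j\<le>R. nmul (0 choose j) ((st g ^^ j) c)) = (\<Sum>j\<le>R. if j = 0 then c else 0)"
    by (intro sum.cong refl) (auto simp: binomial_eq_0)
  also have "\<dots> = c" by simp
  finally show ?case by simp
next
  case (Suc m)
  define X where "X = circ (pw g m) c - pw g m"
  have "circ (pw g (Suc m)) c - pw g (Suc m) = circ g X - g" by (simp add: X_def lam_circ)
  also have "\<dots> = X + st g X" by (simp add: circ_st)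
  also have "st g X = (\<Sum>j\<le>R. nmul (m choose j) ((st g ^^ Suc j) c))"
    unfolding X_def Suc by (simp add: st_sum_right st_nmul_right)
  also have "X + \<dots> = (\<Sum>j\<le>R. nmul (Suc m choose j) ((st g ^^ j) c))"
    unfolding X_def Suc
    by (rule pascal_shift[symmetric, where F="\<lambda>j. (st g ^^ j) c"]) (use Lpow_big R in simp)
  finally show ?case .
qed

lemma st_pw:
  assumes R: "k \<le> R"
  shows "st (pw g m) c = (\<Sum>j\<le>R. nmul (m choose (j + 1)) ((st g ^^ Suc j) c))"
proof -
  have "st (pw g m) c = (circ (pw g m) c - pw g m) - c" by (simp add: bstar_def)
  also have "\<dots> = (\<Sum>j\<le>R. nmul (m choose j) ((st g ^^ j) c)) - c" by (simp add: pw_lam[OF R])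
  also have "(\<Sum>j\<le>R. nmul (m choose j) ((st g ^^ j) c)) = c + (\<Sum>j\<le>R. nmul (m choose Suc j) ((st g ^^ Suc j) c))"
    using shift0[where F="\<lambda>j. (st g ^^ j) c" and R=R and m=m] Lpow_big[of "Suc R" g c] R by simp
  finally show ?thesis by simp
qed

lemma pw_form:
  assumes R: "k \<le> R"
  shows "pw g m = (\<Sum>j\<le>R. nmul (m choose Suc j) ((st g ^^ j) g))"
proof (induction m)
  case 0 then show ?case by simp
next
  case (Suc m)
  have z: "(st g ^^ Suc R) g = 0" using Lpow_big R by simp
  have "pw g (Suc m) = g + pw g m + st g (pw g m)" by (simp add: circ_st)
  also have "st g (pw g m) = (\<Sum>j\<le>R. nmul (m choose Suc j) ((st g ^^ Suc j) g))"
    unfolding Suc by (simp add: st_sum_right st_nmul_right)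
  also have "g + pw g m + \<dots> = pw g m + (g + \<dots>)" by (simp add: algebra_simps)
  also have "g + (\<Sum>j\<le>R. nmul (m choose Suc j) ((st g ^^ Suc j) g)) = (\<Sum>j\<le>R. nmul (m choose j) ((st g ^^ j) g))"
    using shift0[where F="\<lambda>j. (st g ^^ j) g" and R=R and m=m] z by simp
  also have "pw g m + \<dots> = (\<Sum>j\<le>R. nmul (Suc m choose Suc j) ((st g ^^ j) g))"
    unfolding Suc by (simp add: nmul_add_num sum.distrib add.commute)
  finally show ?case .
qed

lemma pw_minus:
  "nmul m g - pw g m = - (\<Sum>j\<le>k. nmul (m choose (j + 2)) ((st g ^^ Suc j) g))"
proof -
  have "pw g m = (\<Sum>j\<le>Suc k. nmul (m choose Suc j) ((st g ^^ j) g))" by (rule pw_form) simp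
  also have "\<dots> = nmul m g + (\<Sum>j\<le>k. nmul (m choose (j + 2)) ((st g ^^ Suc j) g))"
    by (subst sum.atMost_Suc_shift) simp
  finally show ?thesis by simp
qed

lemma PW1:
  assumes "addc S" "S a b" "\<mu> \<ge> 1" "g \<in> W (e + a + b)" "g \<in> W \<mu>" "c \<in> W w1" "c \<in> W w2"
  shows "PF (e + w1) (\<mu> + w2) S (\<lambda>s t. st (pw g (s ^ a * t ^ b)) c)"
proof -
  have "PF (e + w1) (1 * \<mu> + w2) S (\<lambda>s t. \<Sum>j\<le>k. nmul ((s ^ a * t ^ b) choose (j + 1)) ((st g ^^ Suc j) c))"
  proof (rule BIN[OF assms(1,2,3)], simp)
    fix j
    show "(st g ^^ Suc j) c \<in> W ((j + 1) * (e + a + b) + w1) \<and> (st g ^^ Suc j) c \<in> W ((j + 1) * \<mu> + w2)"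
      using Lpow_W[OF assms(4,6), of "Suc j"] Lpow_W[OF assms(5,7), of "Suc j"] by simp
  qed
  then show ?thesis by (simp add: st_pw[of k])
qed

lemma PW2:
  assumes "addc S" "S a b" "\<mu> \<ge> 1" "g \<in> W (e + a + b)" "g \<in> W \<mu>"
  shows "PF e (2 * \<mu>) S (\<lambda>s t. nmul (s ^ a * t ^ b) g - pw g (s ^ a * t ^ b))"
proof -
  have "PF (e + 0) (2 * \<mu> + 0) S (\<lambda>s t. \<Sum>j\<le>k. nmul ((s ^ a * t ^ b) choose (j + 2)) ((st g ^^ Suc j) g))"
  proof (rule BIN[OF assms(1,2,3)], simp)
    fix j
    show "(st g ^^ Suc j) g \<in> W ((j + 2) * (e + a + b) + 0) \<and> (st g ^^ Suc j) g \<in> W ((j + 2) * \<mu> + 0)"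
      using Lpow_W[OF assms(4,4), of "Suc j"] Lpow_W[OF assms(5,5), of "Suc j"]
      by (simp add: algebra_simps)
  qed
  then have "PF e (2 * \<mu>) S (\<lambda>s t. - (\<Sum>j\<le>k. nmul ((s ^ a * t ^ b) choose (j + 2)) ((st g ^^ Suc j) g)))"
    by (simp add: PF_neg)
  then show ?thesis by (simp add: pw_minus)
qed

end

context BRT
begin

lemma addcD: "addc S \<Longrightarrow> S a b \<Longrightarrow> S a' b' \<Longrightarrow> S (a' + a) (b' + b)"
  unfolding addc_def by (metis add.commute)

primrec Pf :: "(nat \<times> nat \<times> 'a) list \<Rightarrow> nat \<Rightarrow> nat \<Rightarrow> 'a" where
  "Pf [] s t = 0"
| "Pf (x # L) s t = circ (pw (snd (snd x)) (s ^ fst x * t ^ fst (snd x))) (Pf L s t)"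

lemma PL:
  assumes S: "addc S" and mu: "\<mu> \<ge> 1" and L: "okL e \<mu> S L"
  shows "(\<forall>c w1 w2. c \<in> W w1 \<longrightarrow> c \<in> W w2 \<longrightarrow> PF (e + w1) (\<mu> + w2) S (\<lambda>s t. st (Pf L s t) c))
     \<and> PF e (2 * \<mu>) S (\<lambda>s t. ev L s t - Pf L s t)"
  using L
proof (induction L)
  case Nil show ?case by (simp add: PF_zero)
next
  case (Cons x L)
  obtain a b g where x: "x = (a, b, g)" by (cases x)
  have h: "S a b" "g \<in> W (e + a + b)" "g \<in> W \<mu>" "okL e \<mu> S L" using Cons.prems x by auto
  have IHa: "\<And>c w1 w2. c \<in> W w1 \<Longrightarrow> c \<in> W w2 \<Longrightarrow> PF (e + w1) (\<mu> + w2) S (\<lambda>s t. st (Pf L s t) c)"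
    and IHb: "PF e (2 * \<mu>) S (\<lambda>s t. ev L s t - Pf L s t)" using Cons.IH[OF h(4)] by auto
  define u where "u s t = pw g (s ^ a * t ^ b)" for s t
  have U1: "\<And>c w1 w2. c \<in> W w1 \<Longrightarrow> c \<in> W w2 \<Longrightarrow> PF (e + w1) (\<mu> + w2) S (\<lambda>s t. st (u s t) c)"
    unfolding u_def by (rule PW1[OF S h(1) mu h(2) h(3)])
  have U2: "PF e (2 * \<mu>) S (\<lambda>s t. nmul (s ^ a * t ^ b) g - u s t)"
    unfolding u_def by (rule PW2[OF S h(1) mu h(2) h(3)])
  have Pfx: "Pf (x # L) s t = circ (u s t) (Pf L s t)" for s t by (simp add: x u_def)
  have hS: "\<And>a b a' b'. S a b \<Longrightarrow> S a' b' \<Longrightarrow> S (a' + a) (b' + b)" using addcD[OF S] by blast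
  have A: "\<forall>c w1 w2. c \<in> W w1 \<longrightarrow> c \<in> W w2 \<longrightarrow> PF (e + w1) (\<mu> + w2) S (\<lambda>s t. st (Pf (x # L) s t) c)"
  proof (intro allI impI)
    fix c w1 w2 assume c: "c \<in> W w1" "c \<in> W w2"
    have A1: "PF (e + w1) (\<mu> + w2) S (\<lambda>s t. st (Pf L s t) c)" by (rule IHa[OF c])
    have A2: "PF (e + (e + w1)) (\<mu> + (\<mu> + w2)) S (\<lambda>s t. st (u s t) (st (Pf L s t) c))"
      by (rule PF_star[where X=u and Z="\<lambda>s t. st (Pf L s t) c" and ex=e and mx=\<mu> and Sx=S and ez="e+w1" and mz="\<mu>+w2" and Sz=S and So=S, OF U1 A1 hS])
    have A2': "PF (e + w1) (\<mu> + w2) S (\<lambda>s t. st (u s t) (st (Pf L s t) c))"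
      by (rule PF_mono[OF A2]) simp_all
    have A3: "PF (e + w1) (\<mu> + w2) S (\<lambda>s t. st (u s t) c)" by (rule U1[OF c])
    have "PF (e + w1) (\<mu> + w2) S (\<lambda>s t. st (u s t) (st (Pf L s t) c) + st (u s t) c + st (Pf L s t) c)"
      by (intro PF_add A1 A2' A3)
    then show "PF (e + w1) (\<mu> + w2) S (\<lambda>s t. st (Pf (x # L) s t) c)"
      by (rule PF_cong) (simp only: Pfx st_circ_left)
  qed
  have PL1: "PF e \<mu> S (\<lambda>s t. Pf L s t)"
  proof -
    have "PF e \<mu> S (ev L)" by (rule PF_ev[OF h(4)])
    moreover have "PF e \<mu> S (\<lambda>s t. ev L s t - Pf L s t)" by (rule PF_mono[OF IHb]) simp_all
    ultimately have "PF e \<mu> S (\<lambda>s t. ev L s t - (ev L s t - Pf L s t))" by (rule PF_diff)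
    then show ?thesis by (rule PF_cong) simp
  qed
  have B1: "PF (e + e) (\<mu> + \<mu>) S (\<lambda>s t. st (u s t) (Pf L s t))" by (rule PF_star[where X=u and Z="\<lambda>s t. Pf L s t" and ex=e and mx=\<mu> and Sx=S and ez=e and mz=\<mu> and Sz=S and So=S, OF U1 PL1 hS])
  have B1': "PF e (2 * \<mu>) S (\<lambda>s t. st (u s t) (Pf L s t))" by (rule PF_mono[OF B1]) simp_all
  have "PF e (2 * \<mu>) S (\<lambda>s t. (nmul (s ^ a * t ^ b) g - u s t) + (ev L s t - Pf L s t) - st (u s t) (Pf L s t))"
    by (intro PF_add PF_diff U2 IHb B1')
  then have B: "PF e (2 * \<mu>) S (\<lambda>s t. ev (x # L) s t - Pf (x # L) s t)"
    by (rule PF_cong) (simp only: Pfx, simp add: x circ_st algebra_simps)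
  show ?case using A B by blast
qed

primrec ser :: "'a \<Rightarrow> nat \<Rightarrow> 'a \<Rightarrow> 'a" where
  "ser X 0 v = 0"
| "ser X (Suc r) v = v - st X (ser X r v)"

lemma DEC:
  assumes R: "k \<le> R"
  shows "circ X (ser X R v) = X + v"
proof -
  obtain X' where X': "circ X X' = 0" "circ X' X = 0" using ex_inv by blast
  define y0 where "y0 = circ X' (X + v)"
  have cy: "circ X y0 = X + v" unfolding y0_def by (simp add: assoc[symmetric] X')
  then have yv: "y0 = v - st X y0" by (simp add: circ_st algebra_simps)
  have "y0 - ser X r v \<in> W r" for r
  proof (induction r)
    case (Suc r)
    have "y0 - ser X (Suc r) v = - st X (y0 - ser X r v)"
      by (subst yv) (simp add: st_diff_right algebra_simps)
    also have "\<dots> \<in> W (Suc r)" by (intro W_neg st_W1 Suc)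
    finally show ?case .
  qed simp
  then have "y0 - ser X R v = 0" using W_big[OF R] by blast
  then have "ser X R v = y0" by simp
  then show ?thesis using cy by simp
qed

lemma ser_PF:
  assumes hx: "\<And>g j1 j2. g \<in> W j1 \<Longrightarrow> g \<in> W j2 \<Longrightarrow> PF (ex + j1) (mx + j2) Sx (\<lambda>s t. st (X s t) g)"
    and hV: "PF e m S V"
    and hS: "\<And>a b a' b'. S a b \<Longrightarrow> Sx a' b' \<Longrightarrow> S (a' + a) (b' + b)"
  shows "PF e m S (\<lambda>s t. ser (X s t) r (V s t))"
proof (induction r)
  case 0 then show ?case by (simp add: PF_zero)
next
  case (Suc r)
  have "PF (ex + e) (mx + m) S (\<lambda>s t. st (X s t) (ser (X s t) r (V s t)))"
    by (rule PF_star[where X=X and Z="\<lambda>s t. ser (X s t) r (V s t)" and ex=ex and mx=mx and Sx=Sx and ez=e and mz=m and Sz=S and So=S, OF hx Suc hS])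
  then have "PF e m S (\<lambda>s t. st (X s t) (ser (X s t) r (V s t)))" by (rule PF_mono) simp_all
  then show ?case using hV by (simp add: PF_diff)
qed

lemma T:
  assumes S: "addc S"
  shows "PF e \<mu> S x \<Longrightarrow> \<mu> \<ge> 1 \<Longrightarrow> c \<in> W w1 \<Longrightarrow> c \<in> W w2 \<Longrightarrow> PF (e + w1) (\<mu> + w2) S (\<lambda>s t. st (x s t) c)"
proof (induction "k - \<mu>" arbitrary: \<mu> e x c w1 w2 rule: less_induct)
  case less
  show ?case
  proof (cases "k \<le> \<mu>")
    case True
    have "x s t = 0" for s t by (rule PF_big[OF less.prems(1) True])
    then show ?thesis by (simp add: PF_zero)
  next
    case False
    have hS: "\<And>a b a' b'. S a b \<Longrightarrow> S a' b' \<Longrightarrow> S (a' + a) (b' + b)" using addcD[OF S] by blast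
    obtain L where xL: "\<And>s t. x s t = ev L s t" "okL e \<mu> S L" using less.prems(1) unfolding PF_def by blast
    define P where "P = Pf L"
    have Pa: "\<And>c w1 w2. c \<in> W w1 \<Longrightarrow> c \<in> W w2 \<Longrightarrow> PF (e + w1) (\<mu> + w2) S (\<lambda>s t. st (P s t) c)"
      and Pb: "PF e (2 * \<mu>) S (\<lambda>s t. ev L s t - P s t)"
      using PL[OF S less.prems(2) xL(2)] unfolding P_def by auto
    define y where "y s t = ser (P s t) k (x s t - P s t)" for s t
    have yPF: "PF e (2 * \<mu>) S y"
      unfolding y_def
    proof (rule ser_PF[where X=P and V="\<lambda>s t. x s t - P s t" and ex=e and mx=\<mu> and Sx=S and e=e and m="2*\<mu>" and S=S, OF Pa _ hS])
      show "PF e (2 * \<mu>) S (\<lambda>s t. x s t - P s t)" using Pb xL(1) by simp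
    qed
    have xy: "x s t = circ (P s t) (y s t)" for s t unfolding y_def by (simp add: DEC)
    have IH: "PF (e + w1) (2 * \<mu> + w2) S (\<lambda>s t. st (y s t) c)"
      by (rule less.hyps[of "2 * \<mu>"]) (use False less.prems in \<open>simp_all add: yPF\<close>)
    have B: "PF (e + (e + w1)) (\<mu> + (2 * \<mu> + w2)) S (\<lambda>s t. st (P s t) (st (y s t) c))"
      by (rule PF_star[where X=P and Z="\<lambda>s t. st (y s t) c" and ex=e and mx=\<mu> and Sx=S and ez="e+w1" and mz="2*\<mu>+w2" and Sz=S and So=S, OF Pa IH hS])
    have B': "PF (e + w1) (\<mu> + w2) S (\<lambda>s t. st (P s t) (st (y s t) c))" by (rule PF_mono[OF B]) simp_all
    have C: "PF (e + w1) (\<mu> + w2) S (\<lambda>s t. st (P s t) c)" by (rule Pa[OF less.prems(3,4)])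
    have D: "PF (e + w1) (\<mu> + w2) S (\<lambda>s t. st (y s t) c)" by (rule PF_mono[OF IH]) simp_all
    have "PF (e + w1) (\<mu> + w2) S (\<lambda>s t. st (P s t) (st (y s t) c) + st (P s t) c + st (y s t) c)"
      by (intro PF_add B' C D)
    then show ?thesis by (rule PF_cong) (simp add: xy st_circ_left)
  qed
qed

end

definition O1 :: "nat \<Rightarrow> nat \<Rightarrow> bool" where "O1 a b \<longleftrightarrow> 1 \<le> a + b"
definition O2 :: "nat \<Rightarrow> nat \<Rightarrow> bool" where "O2 a b \<longleftrightarrow> 2 \<le> a + b"
definition NN :: "nat \<Rightarrow> nat \<Rightarrow> bool" where "NN a b \<longleftrightarrow> 2 \<le> a \<or> 2 \<le> b \<or> 3 \<le> a + b"
definition Sd :: "nat \<Rightarrow> nat \<Rightarrow> bool" where "Sd a b \<longleftrightarrow> a = b \<and> 1 \<le> a"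
definition S1 :: "nat \<Rightarrow> nat \<Rightarrow> bool" where "S1 a b \<longleftrightarrow> b = 0 \<and> 1 \<le> a"

lemma addc_O1: "addc O1" by (auto simp: addc_def O1_def)
lemma addc_O2: "addc O2" by (auto simp: addc_def O2_def)
lemma addc_NN: "addc NN" by (auto simp: addc_def NN_def)
lemma addc_Sd: "addc Sd" by (auto simp: addc_def Sd_def)
lemma addc_S1: "addc S1" by (auto simp: addc_def S1_def)

context BRT
begin

lemma TO1: "PF e 1 O1 Y \<Longrightarrow> g \<in> W j1 \<Longrightarrow> g \<in> W j2 \<Longrightarrow> PF (e + j1) (1 + j2) O1 (\<lambda>s t. st (Y s t) g)"
  by (rule T[OF addc_O1]) simp_all

lemma N1:
  assumes Y: "PF 0 1 O1 Y" and Z: "PF 0 1 NN Z"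
  shows "PF 0 1 NN (\<lambda>s t. st (Y s t + Z s t) c - st (Y s t) c)"
proof -
  have hY: "\<And>g j1 j2. g \<in> W j1 \<Longrightarrow> g \<in> W j2 \<Longrightarrow> PF (0 + j1) (1 + j2) O1 (\<lambda>s t. st (Y s t) g)"
    by (rule TO1[OF Y])
  have hS: "\<And>a b a' b'. NN a b \<Longrightarrow> O1 a' b' \<Longrightarrow> NN (a' + a) (b' + b)" by (auto simp: NN_def O1_def)
  define z where "z s t = ser (Y s t) k (Z s t)" for s t
  have zPF: "PF 0 1 NN z" unfolding z_def
    by (rule ser_PF[where X=Y and V=Z and ex=0 and mx=1 and Sx=O1 and e=0 and m=1 and S=NN, OF hY Z hS])
  have yz: "Y s t + Z s t = circ (Y s t) (z s t)" for s t by (simp add: z_def DEC)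
  have A: "PF (0 + 1) (1 + 1) NN (\<lambda>s t. st (z s t) c)" by (rule T[OF addc_NN zPF]) simp_all
  have B: "PF (0 + (0 + 1)) (1 + (1 + 1)) NN (\<lambda>s t. st (Y s t) (st (z s t) c))"
    by (rule PF_star[where X=Y and Z="\<lambda>s t. st (z s t) c" and ex=0 and mx=1 and Sx=O1 and ez="0+1" and mz="1+1" and Sz=NN and So=NN, OF hY A hS])
  have "PF 0 1 NN (\<lambda>s t. st (Y s t) (st (z s t) c) + st (z s t) c)"
    by (intro PF_add PF_mono[OF A] PF_mono[OF B]) simp_all
  then show ?thesis by (rule PF_cong) (simp add: yz st_circ_left)
qed

lemma N2:
  assumes X: "PF 0 1 O1 X" and V: "PF 0 1 Sd V"
  shows "PF 0 1 NN (\<lambda>s t. st (X s t + V s t) c - st (X s t) c - st (V s t) c)"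
proof -
  have hX: "\<And>g j1 j2. g \<in> W j1 \<Longrightarrow> g \<in> W j2 \<Longrightarrow> PF (0 + j1) (1 + j2) O1 (\<lambda>s t. st (X s t) g)"
    by (rule TO1[OF X])
  have V2: "PF 0 1 O2 V" by (rule PF_mono[OF V]) (auto simp: Sd_def O2_def)
  have V1: "PF 0 1 O1 V" by (rule PF_mono[OF V]) (auto simp: Sd_def O1_def)
  have hS2: "\<And>a b a' b'. O2 a b \<Longrightarrow> O1 a' b' \<Longrightarrow> O2 (a' + a) (b' + b)" by (auto simp: O2_def O1_def)
  have hS3: "\<And>a b a' b'. O2 a b \<Longrightarrow> O1 a' b' \<Longrightarrow> NN (a' + a) (b' + b)" by (auto simp: NN_def O2_def O1_def)
  have hSd: "\<And>a b a' b'. Sd a b \<Longrightarrow> O1 a' b' \<Longrightarrow> NN (a' + a) (b' + b)" by (auto simp: NN_def Sd_def O1_def)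
  have hSN: "\<And>a b a' b'. NN a b \<Longrightarrow> O1 a' b' \<Longrightarrow> NN (a' + a) (b' + b)" by (auto simp: NN_def O1_def)
  define r where "r s t = ser (X s t) k (V s t)" for s t
  have rPF: "PF 0 1 O2 r" unfolding r_def
    by (rule ser_PF[where X=X and V=V and ex=0 and mx=1 and Sx=O1 and e=0 and m=1 and S=O2, OF hX V2 hS2])
  define Zn where "Zn s t = - st (X s t) (r s t)" for s t
  have ZnPF: "PF 0 1 NN Zn"
  proof -
    have "PF (0 + 0) (1 + 1) NN (\<lambda>s t. st (X s t) (r s t))"
      by (rule PF_star[where X=X and Z=r and ex=0 and mx=1 and Sx=O1 and ez=0 and mz=1 and Sz=O2 and So=NN, OF hX rPF hS3])
    then have "PF 0 1 NN (\<lambda>s t. st (X s t) (r s t))" by (rule PF_mono) simp_all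
    then show ?thesis unfolding Zn_def by (rule PF_neg)
  qed
  have xv: "X s t + V s t = circ (X s t) (V s t + Zn s t)" for s t
  proof -
    have "circ (X s t) (ser (X s t) (Suc k) (V s t)) = X s t + V s t" by (rule DEC) simp
    then show ?thesis by (simp add: Zn_def r_def)
  qed
  define D1 where "D1 s t = st (V s t + Zn s t) c - st (V s t) c" for s t
  have D1PF: "PF 0 1 NN D1" unfolding D1_def by (rule N1[OF V1 ZnPF])
  have Vc: "PF (0 + 1) (1 + 1) Sd (\<lambda>s t. st (V s t) c)" by (rule T[OF addc_Sd V]) simp_all
  have A: "PF (0 + (0 + 1)) (1 + (1 + 1)) NN (\<lambda>s t. st (X s t) (st (V s t) c))"
    by (rule PF_star[where X=X and Z="\<lambda>s t. st (V s t) c" and ex=0 and mx=1 and Sx=O1 and ez="0+1" and mz="1+1" and Sz=Sd and So=NN, OF hX Vc hSd])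
  have B: "PF (0 + 0) (1 + 1) NN (\<lambda>s t. st (X s t) (D1 s t))"
    by (rule PF_star[where X=X and Z=D1 and ex=0 and mx=1 and Sx=O1 and ez=0 and mz=1 and Sz=NN and So=NN, OF hX D1PF hSN])
  have "PF 0 1 NN (\<lambda>s t. st (X s t) (st (V s t) c) + st (X s t) (D1 s t) + D1 s t)"
    by (intro PF_add PF_mono[OF A] PF_mono[OF B] D1PF) simp_all
  then show ?thesis
  proof (rule PF_cong)
    fix s t
    have "st (X s t + V s t) c = st (X s t) (st (V s t + Zn s t) c) + st (X s t) c + st (V s t + Zn s t) c"
      by (simp only: xv st_circ_left)
    also have "st (V s t + Zn s t) c = st (V s t) c + D1 s t" by (simp add: D1_def)
    finally show "st (X s t + V s t) c - st (X s t) c - st (V s t) c =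
      st (X s t) (st (V s t) c) + st (X s t) (D1 s t) + D1 s t"
      by (simp add: st_add_right algebra_simps)
  qed
qed

end

definition wk0 :: "(nat \<Rightarrow> 'a set) \<Rightarrow> (nat \<times> nat \<times> 'a) list \<Rightarrow> bool" where
  "wk0 WW L \<longleftrightarrow> (\<forall>(a, b, g)\<in>set L. g \<in> WW a \<and> g \<in> WW b)"

lemma wk0_Nil[simp]: "wk0 WW []" by (simp add: wk0_def)
lemma wk0_Cons[simp]: "wk0 WW ((a, b, g) # L) \<longleftrightarrow> g \<in> WW a \<and> g \<in> WW b \<and> wk0 WW L"
  by (simp add: wk0_def)

definition cs :: "(nat \<times> nat \<times> 'a::ab_group_add) list \<Rightarrow> nat \<Rightarrow> 'a" where
  "cs L t = sum_list (map (\<lambda>(a, b, g). if a = 1 then nmul (t ^ b) g else 0) L)"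
lemma cs_Nil[simp]: "cs [] t = 0" by (simp add: cs_def)
lemma cs_Cons[simp]: "cs ((a, b, g) # L) t = (if a = 1 then nmul (t ^ b) g else 0) + cs L t"
  by (simp add: cs_def)

definition c11 :: "(nat \<times> nat \<times> 'a::ab_group_add) list \<Rightarrow> 'a" where
  "c11 L = sum_list (map (\<lambda>(a, b, g). if a = 1 \<and> b = 1 then g else 0) L)"
lemma c11_Nil[simp]: "c11 [] = 0" by (simp add: c11_def)
lemma c11_Cons[simp]: "c11 ((a, b, g) # L) = (if a = 1 \<and> b = 1 then g else 0) + c11 L"
  by (simp add: c11_def)

lemma hom_sum:
  fixes h :: "'a::ab_group_add \<Rightarrow> 'b::ab_group_add"
  assumes "\<And>x y. h (x + y) = h x + h y"
  shows "h (sum f A) = (\<Sum>i\<in>A. h (f i))"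
proof -
  have h0: "h 0 = 0" using assms[of 0 0] by simp
  show ?thesis by (induction A rule: infinite_finite_induct) (simp_all add: assms h0)
qed

locale FIN = BRT +
  fixes p \<xi> :: nat
  assumes pprime: "prime p" and p2: "2 < p" and kp: "k < p"
    and SLN: "\<And>\<alpha>. \<alpha> \<le> p - 2 \<Longrightarrow>
      [(\<Sum>i=0..p-2. \<xi> ^ (p - 1 - i) * (\<xi> ^ i) ^ \<alpha>) = (if \<alpha> = 1 then p - 1 else 0)] (mod N)"
begin

definition Dx :: "(nat \<Rightarrow> 'a) \<Rightarrow> 'a" where
  "Dx f = (\<Sum>i=0..p-2. nmul (\<xi> ^ (p - 1 - i)) (f (\<xi> ^ i)))"

definition D11 :: "(nat \<Rightarrow> nat \<Rightarrow> 'a) \<Rightarrow> 'a" where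
  "D11 F = Dx (\<lambda>s. Dx (\<lambda>t. F s t))"

lemma dotp_Dx: "dotp p \<xi> circ a b = Dx (\<lambda>s. st (nmul s a) b)"
  by (simp add: dotp_def Dx_def)

lemma Dx_add: "Dx (\<lambda>s. f s + g s) = Dx f + Dx g"
  by (simp add: Dx_def nmul_add sum.distrib)

lemma Dx_hom:
  assumes "\<And>x y. h (x + y) = h x + h y"
  shows "Dx (\<lambda>s. h (f s)) = h (Dx f)"
  unfolding Dx_def by (simp add: hom_sum[of h, OF assms] nmul_hom[of h, OF assms])

lemma Dx_neg: "Dx (\<lambda>s. - f s) = - Dx f"
  by (rule Dx_hom) simp

lemma Dx_diff: "Dx (\<lambda>s. f s - g s) = Dx f - Dx g"
  using Dx_add[of f "\<lambda>s. - g s"] Dx_neg[of g] by simp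

lemma Dx_mono:
  assumes "\<alpha> \<le> p - 2"
  shows "Dx (\<lambda>s. nmul (s ^ \<alpha>) y) = (if \<alpha> = 1 then nmul (p - 1) y else 0)"
proof -
  have "Dx (\<lambda>s. nmul (s ^ \<alpha>) y) = (\<Sum>i=0..p-2. nmul (\<xi> ^ (p - 1 - i) * (\<xi> ^ i) ^ \<alpha>) y)"
    unfolding Dx_def by (simp add: nmul_mult)
  also have "\<dots> = nmul (\<Sum>i=0..p-2. \<xi> ^ (p - 1 - i) * (\<xi> ^ i) ^ \<alpha>) y"
    by (simp add: nmul_sum_num)
  also have "\<dots> = nmul (if \<alpha> = 1 then p - 1 else 0) y"
    by (rule nmul_cong[where N=N]) (simp add: tors, rule SLN[OF assms])
  finally show ?thesis by simp
qed

lemma Dx_const: "Dx (\<lambda>s. y) = 0"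
  using Dx_mono[of 0 y] by simp

lemma Dx_ev:
  assumes "wk0 W L"
  shows "Dx (\<lambda>s. ev L s t) = nmul (p - 1) (cs L t)"
  using assms
proof (induction L)
  case Nil then show ?case by (simp add: Dx_const)
next
  case (Cons x L)
  obtain a b g where x: "x = (a, b, g)" by (cases x)
  have g: "g \<in> W a" "wk0 W L" using Cons.prems x by auto
  have tm: "Dx (\<lambda>s. nmul (s ^ a * t ^ b) g) = nmul (p - 1) (if a = 1 then nmul (t ^ b) g else 0)"
  proof (cases "a \<le> p - 2")
    case True
    have "Dx (\<lambda>s. nmul (s ^ a * t ^ b) g) = Dx (\<lambda>s. nmul (s ^ a) (nmul (t ^ b) g))"
      by (simp add: nmul_mult)
    also have "\<dots> = (if a = 1 then nmul (p - 1) (nmul (t ^ b) g) else 0)" by (rule Dx_mono[OF True])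
    finally show ?thesis by simp
  next
    case False
    then have "k \<le> a" using kp by simp
    then have "g = 0" using W_big g(1) by blast
    moreover have "a \<noteq> 1" using False p2 by simp
    ultimately show ?thesis by (simp add: Dx_const)
  qed
  have "Dx (\<lambda>s. ev (x # L) s t) = Dx (\<lambda>s. nmul (s ^ a * t ^ b) g) + Dx (\<lambda>s. ev L s t)"
    by (simp add: x Dx_add)
  then show ?case using tm Cons.IH[OF g(2)] by (simp add: x nmul_add)
qed

definition swapL :: "(nat \<times> nat \<times> 'a) list \<Rightarrow> (nat \<times> nat \<times> 'a) list" where
  "swapL L = map (\<lambda>(a, b, g). (b, a, g)) L"

definition colL :: "(nat \<times> nat \<times> 'a) list \<Rightarrow> (nat \<times> nat \<times> 'a) list" where
  "colL L = map (\<lambda>(a, b, g). (a, 0, if b = 1 then g else 0)) L"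

lemma D11_ev:
  assumes "wk0 W L"
  shows "D11 (ev L) = nmul (p - 1) (nmul (p - 1) (c11 L))"
proof -
  have sw: "ev L s t = ev (swapL L) t s" for s t
    unfolding swapL_def by (induction L) (auto simp: mult.commute)
  have wsw: "wk0 W (swapL L)" using assms unfolding swapL_def by (induction L) auto
  have wcol: "wk0 W (colL L)" using assms unfolding colL_def by (induction L) auto
  have csw: "cs (swapL L) s = ev (colL L) s 0" for s
    unfolding swapL_def colL_def by (induction L) auto
  have ccol: "cs (colL L) 0 = c11 L"
    unfolding colL_def by (induction L) auto
  have inner: "Dx (\<lambda>t. ev L s t) = nmul (p - 1) (ev (colL L) s 0)" for s
  proof -
    have "Dx (\<lambda>t. ev L s t) = Dx (\<lambda>t. ev (swapL L) t s)" by (simp only: sw)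
    also have "\<dots> = nmul (p - 1) (cs (swapL L) s)" by (rule Dx_ev[OF wsw])
    finally show ?thesis by (simp only: csw)
  qed
  have "D11 (ev L) = Dx (\<lambda>s. nmul (p - 1) (ev (colL L) s 0))"
    unfolding D11_def by (simp only: inner)
  also have "\<dots> = nmul (p - 1) (Dx (\<lambda>s. ev (colL L) s 0))"
    by (rule Dx_hom) (simp add: nmul_add)
  also have "\<dots> = nmul (p - 1) (nmul (p - 1) (c11 L))"
    by (simp add: Dx_ev[OF wcol] ccol)
  finally show ?thesis .
qed

lemma okL_wk: "okL e \<mu> S L \<Longrightarrow> wk0 W L"
proof (induction L)
  case (Cons x L)
  obtain a b g where x: "x = (a, b, g)" by (cases x)
  then show ?case using Cons W_monoD[of g "e + a + b" a] W_monoD[of g "e + a + b" b] by auto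
qed simp

lemma D11_NN:
  assumes "PF e \<mu> NN F"
  shows "D11 F = 0"
proof -
  obtain L where L: "\<And>s t. F s t = ev L s t" "okL e \<mu> NN L" using assms unfolding PF_def by blast
  have F: "F = ev L" using L(1) by (intro ext) simp
  have "c11 L = 0" using L(2)
  proof (induction L)
    case (Cons x L)
    obtain a b g where x: "x = (a, b, g)" by (cases x)
    then show ?case using Cons by (auto simp: NN_def)
  qed simp
  then show ?thesis unfolding F by (simp add: D11_ev[OF okL_wk[OF L(2)]])
qed

lemma D11_add: "D11 (\<lambda>s t. F s t + G s t) = D11 F + D11 G"
  unfolding D11_def by (simp add: Dx_add)

lemma D11_diff: "D11 (\<lambda>s t. F s t - G s t) = D11 F - D11 G"
  unfolding D11_def by (simp add: Dx_diff)

lemma D11_swap: "D11 (\<lambda>s t. F t s) = D11 F"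
proof -
  have "D11 (\<lambda>s t. F t s) = (\<Sum>i=0..p-2. \<Sum>j=0..p-2. nmul (\<xi> ^ (p - 1 - i)) (nmul (\<xi> ^ (p - 1 - j)) (F (\<xi> ^ j) (\<xi> ^ i))))"
    unfolding D11_def Dx_def by (simp add: nmul_sum)
  also have "\<dots> = (\<Sum>j=0..p-2. \<Sum>i=0..p-2. nmul (\<xi> ^ (p - 1 - i)) (nmul (\<xi> ^ (p - 1 - j)) (F (\<xi> ^ j) (\<xi> ^ i))))"
    by (rule sum.swap)
  also have "\<dots> = D11 F"
    unfolding D11_def Dx_def by (simp add: nmul_sum nmul_comm)
  finally show ?thesis .
qed

end

context FIN
begin

lemma K: "D11 (\<lambda>s t. st (circ (nmul s a) (nmul t b)) c) = dotp p \<xi> circ a (dotp p \<xi> circ b c)"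
proof -
  have inner: "Dx (\<lambda>t. st (circ (nmul s a) (nmul t b)) c) = st (nmul s a) (dotp p \<xi> circ b c) + dotp p \<xi> circ b c" for s
  proof -
    have "Dx (\<lambda>t. st (circ (nmul s a) (nmul t b)) c) = Dx (\<lambda>t. st (nmul s a) (st (nmul t b) c) + st (nmul s a) c + st (nmul t b) c)"
      by (simp only: st_circ_left)
    also have "\<dots> = Dx (\<lambda>t. st (nmul s a) (st (nmul t b) c)) + Dx (\<lambda>t. st (nmul s a) c) + Dx (\<lambda>t. st (nmul t b) c)"
      by (simp only: Dx_add)
    also have "Dx (\<lambda>t. st (nmul s a) (st (nmul t b) c)) = st (nmul s a) (Dx (\<lambda>t. st (nmul t b) c))"
      by (rule Dx_hom) (rule st_add_right)
    also have "Dx (\<lambda>t. st (nmul s a) c) = 0" by (rule Dx_const)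
    finally show ?thesis by (simp add: dotp_Dx)
  qed
  have "D11 (\<lambda>s t. st (circ (nmul s a) (nmul t b)) c) = Dx (\<lambda>s. st (nmul s a) (dotp p \<xi> circ b c) + dotp p \<xi> circ b c)"
    unfolding D11_def by (simp only: inner)
  also have "\<dots> = Dx (\<lambda>s. st (nmul s a) (dotp p \<xi> circ b c)) + Dx (\<lambda>s. dotp p \<xi> circ b c)" by (rule Dx_add)
  finally show ?thesis by (simp add: Dx_const dotp_Dx)
qed

lemma ev_filter: "ev L s t = ev (filter (\<lambda>x. fst x = 1) L) s t + ev (filter (\<lambda>x. fst x \<noteq> 1) L) s t"
proof (induction L)
  case (Cons x L) then show ?case by (cases x) (auto simp: algebra_simps)
qed simp

lemma ev_filter1: "ev (filter (\<lambda>x. fst x = 1) L) s 1 = nmul s (cs L 1)"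
proof (induction L)
  case (Cons x L) then show ?case by (cases x) (auto simp: nmul_add)
qed simp

lemma cs_W: "okL 1 \<mu> S1 L \<Longrightarrow> cs L 1 \<in> W 2"
proof (induction L)
  case (Cons x L)
  obtain a b g where x: "x = (a, b, g)" by (cases x)
  have "g \<in> W (1 + a + b)" "okL 1 \<mu> S1 L" using Cons.prems x by auto
  then have "a = 1 \<longrightarrow> g \<in> W 2" using W_monoD[of g "1 + a + b" 2] by auto
  then show ?case using Cons.IH[OF \<open>okL 1 \<mu> S1 L\<close>] x by (auto intro: W_add)
qed simp

lemma Zlist:
  assumes "okL 1 \<mu> S1 L" "1 \<le> \<mu>"
  shows "okL 0 1 NN (map (\<lambda>(a, b, g). (a, Suc 0, g)) (filter (\<lambda>x. fst x \<noteq> 1) L))"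
    and "ev (map (\<lambda>(a, b, g). (a, Suc 0, g)) (filter (\<lambda>x. fst x \<noteq> 1) L)) s t = nmul t (ev (filter (\<lambda>x. fst x \<noteq> 1) L) s 1)"
proof -
  show "okL 0 1 NN (map (\<lambda>(a, b, g). (a, Suc 0, g)) (filter (\<lambda>x. fst x \<noteq> 1) L))"
    using assms(1)
  proof (induction L)
    case (Cons x L)
    obtain a b g where x: "x = (a, b, g)" by (cases x)
    have h: "S1 a b" "g \<in> W (1 + a + b)" "okL 1 \<mu> S1 L" using Cons.prems x by auto
    show ?case
    proof (cases "a = 1")
      case True then show ?thesis using Cons.IH[OF h(3)] x by simp
    next
      case False
      have "b = 0" "2 \<le> a" using h(1) False by (auto simp: S1_def)
      then show ?thesis using Cons.IH[OF h(3)] x h(2) by (auto simp: NN_def add.commute)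
    qed
  qed simp
  show "ev (map (\<lambda>(a, b, g). (a, Suc 0, g)) (filter (\<lambda>x. fst x \<noteq> 1) L)) s t = nmul t (ev (filter (\<lambda>x. fst x \<noteq> 1) L) s 1)"
  proof (induction L)
    case (Cons x L) then show ?case by (cases x) (auto simp: nmul_add nmul_mult[symmetric] mult.commute)
  qed simp
qed

definition diagL :: "(nat \<times> nat \<times> 'a) list \<Rightarrow> (nat \<times> nat \<times> 'a) list" where
  "diagL L = map (\<lambda>(a, b, g). (a, a, g)) L"

definition scaleL :: "nat \<Rightarrow> (nat \<times> nat \<times> 'a) list \<Rightarrow> (nat \<times> nat \<times> 'a) list" where
  "scaleL m L = map (\<lambda>(a, b, g). (a, b, nmul (m ^ a) g)) L"

lemma ev_diag: "ev L (s * t) 1 = ev (diagL L) s t"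
  unfolding diagL_def by (induction L) (auto simp: power_mult_distrib)

lemma wk_diag: "okL e \<mu> S L \<Longrightarrow> wk0 W (diagL L)"
proof (induction L)
  case (Cons x L)
  obtain a b g where x: "x = (a, b, g)" by (cases x)
  then show ?case using Cons W_monoD[of g "e + a + b" a] by (auto simp: diagL_def)
qed (simp add: diagL_def)

lemma c11_diag: "c11 (diagL L) = cs L 1"
  unfolding diagL_def by (induction L) auto

lemma ev_scale: "ev L (s * m) t = ev (scaleL m L) s t"
  unfolding scaleL_def by (induction L) (auto simp: power_mult_distrib nmul_mult[symmetric] algebra_simps)

lemma wk_scale: "wk0 W L \<Longrightarrow> wk0 W (scaleL m L)"
proof (induction L)
  case (Cons x L)
  obtain a b g where x: "x = (a, b, g)" by (cases x)
  then show ?case using Cons by (auto simp: scaleL_def W_nmul)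
qed (simp add: scaleL_def)

lemma cs_scale: "cs (scaleL m L) 1 = nmul m (cs L 1)"
proof (induction L)
  case (Cons x L) then show ?case by (cases x) (auto simp: scaleL_def nmul_add)
qed (simp add: scaleL_def)

lemma M: "D11 (\<lambda>s t. st (circ (nmul s a) (nmul t b)) c)
  = D11 (\<lambda>s t. st (nmul s a + nmul t b) c) + dotp p \<xi> circ (dotp p \<xi> circ a b) c"
proof -
  have xa: "PF 0 1 S1 (\<lambda>s t. nmul s a)"
    by (rule PF_cong[OF PF_single[where a=1 and b=0 and g=a]]) (simp_all add: S1_def)
  have "PF (0 + 1) (1 + 1) S1 (\<lambda>s t. st (nmul s a) b)" by (rule T[OF addc_S1 xa]) simp_all
  then have "PF 1 2 S1 (\<lambda>s t. st (nmul s a) b)" by (simp add: numeral_2_eq_2)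
  then obtain Lw where Lw: "\<And>s t. st (nmul s a) b = ev Lw s t" "okL 1 2 S1 Lw"
    unfolding PF_def by blast
  define e1 where "e1 = cs Lw 1"
  have e1W: "e1 \<in> W 2" unfolding e1_def by (rule cs_W[OF Lw(2)])
  have ab: "dotp p \<xi> circ a b = nmul (p - 1) e1"
    unfolding dotp_Dx e1_def using Dx_ev[OF okL_wk[OF Lw(2)], of 1] by (simp add: Lw(1)[of _ 1])
  define L2 where "L2 = filter (\<lambda>x. fst x \<noteq> 1) Lw"
  define ZL where "ZL = map (\<lambda>(a, b, g). (a, Suc 0, g)) L2"
  have ZLok: "okL 0 1 NN ZL" unfolding ZL_def L2_def by (rule Zlist(1)[OF Lw(2)]) simp
  have ZLev: "ev ZL s t = nmul t (ev L2 s 1)" for s t unfolding ZL_def L2_def by (rule Zlist(2)[OF Lw(2)]) simp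
  define X where "X s t = nmul s a + nmul t b" for s t
  define V where "V s t = nmul (s * t) e1" for s t
  have XPF: "PF 0 1 O1 X"
  proof -
    have "PF 0 1 O1 (\<lambda>s t. nmul (s ^ 1 * t ^ 0) a)" by (rule PF_single) (simp_all add: O1_def)
    moreover have "PF 0 1 O1 (\<lambda>s t. nmul (s ^ 0 * t ^ 1) b)" by (rule PF_single) (simp_all add: O1_def)
    ultimately show ?thesis unfolding X_def by (rule PF_cong[OF PF_add]) simp
  qed
  have VPF: "PF 0 1 Sd V"
  proof -
    have "(0::nat) + 1 + 1 = 2" by simp
    then have e1W': "e1 \<in> W (0 + 1 + 1)" using e1W by (simp only:)
    have e1W1: "e1 \<in> W 1" by simp
    have "PF 0 1 Sd (\<lambda>s t. nmul (s ^ 1 * t ^ 1) e1)"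
      by (rule PF_single[where a=1 and b=1 and g=e1, OF _ e1W' e1W1]) (simp add: Sd_def)
    then show ?thesis unfolding V_def by (rule PF_cong) simp
  qed
  have VO1: "PF 0 1 O1 V" by (rule PF_mono[OF VPF]) (auto simp: Sd_def O1_def)
  have YPF: "PF 0 1 O1 (\<lambda>s t. X s t + V s t)" by (rule PF_add[OF XPF VO1])
  have ZPF: "PF 0 1 NN (ev ZL)" by (rule PF_ev[OF ZLok])
  have decomp: "circ (nmul s a) (nmul t b) = (X s t + V s t) + ev ZL s t" for s t
  proof -
    have "st (nmul s a) b = ev Lw s 1" by (rule Lw(1))
    also have "\<dots> = nmul s e1 + ev L2 s 1" unfolding L2_def e1_def
      by (subst ev_filter) (simp only: ev_filter1)
    finally have "st (nmul s a) (nmul t b) = nmul t (nmul s e1) + nmul t (ev L2 s 1)"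
      by (simp add: st_nmul_right nmul_add)
    moreover have "nmul t (nmul s e1) = V s t" by (simp add: V_def nmul_mult nmul_comm)
    ultimately show ?thesis by (simp add: circ_st X_def ZLev algebra_simps)
  qed
  have n1: "PF 0 1 NN (\<lambda>s t. st ((X s t + V s t) + ev ZL s t) c - st (X s t + V s t) c)"
    by (rule N1[OF YPF ZPF])
  have n2: "PF 0 1 NN (\<lambda>s t. st (X s t + V s t) c - st (X s t) c - st (V s t) c)"
    by (rule N2[OF XPF VPF])
  have G: "st (circ (nmul s a) (nmul t b)) c =
      st (X s t) c + st (V s t) c
      + (st (X s t + V s t) c - st (X s t) c - st (V s t) c)
      + (st ((X s t + V s t) + ev ZL s t) c - st (X s t + V s t) c)" for s t
    by (simp add: decomp)
  have "D11 (\<lambda>s t. st (circ (nmul s a) (nmul t b)) c) = D11 (\<lambda>s t. st (X s t) c) + D11 (\<lambda>s t. st (V s t) c)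
      + D11 (\<lambda>s t. st (X s t + V s t) c - st (X s t) c - st (V s t) c)
      + D11 (\<lambda>s t. st ((X s t + V s t) + ev ZL s t) c - st (X s t + V s t) c)"
    by (simp only: G D11_add)
  also have "D11 (\<lambda>s t. st (X s t + V s t) c - st (X s t) c - st (V s t) c) = 0" by (rule D11_NN[OF n2])
  also have "D11 (\<lambda>s t. st ((X s t + V s t) + ev ZL s t) c - st (X s t + V s t) c) = 0" by (rule D11_NN[OF n1])
  finally have main: "D11 (\<lambda>s t. st (circ (nmul s a) (nmul t b)) c) = D11 (\<lambda>s t. st (X s t) c) + D11 (\<lambda>s t. st (V s t) c)"
    by simp
  have xe: "PF 0 1 S1 (\<lambda>s t. nmul s e1)"
    by (rule PF_cong[OF PF_single[where a=1 and b=0 and g=e1]]) (simp_all add: S1_def)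
  have "PF (0 + 1) (1 + 1) S1 (\<lambda>s t. st (nmul s e1) c)" by (rule T[OF addc_S1 xe]) simp_all
  then have "PF 1 2 S1 (\<lambda>s t. st (nmul s e1) c)" by (simp add: numeral_2_eq_2)
  then obtain Lc where Lc: "\<And>s t. st (nmul s e1) c = ev Lc s t" "okL 1 2 S1 Lc"
    unfolding PF_def by blast
  have "D11 (\<lambda>s t. st (V s t) c) = D11 (ev (diagL Lc))"
  proof -
    have "(\<lambda>s t. st (V s t) c) = ev (diagL Lc)"
      by (intro ext) (simp only: V_def Lc(1)[of "_ * _" 1] ev_diag)
    then show ?thesis by simp
  qed
  also have "\<dots> = nmul (p - 1) (nmul (p - 1) (cs Lc 1))"
    by (simp add: D11_ev[OF wk_diag[OF Lc(2)]] c11_diag)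
  also have "\<dots> = dotp p \<xi> circ (dotp p \<xi> circ a b) c"
  proof -
    have "dotp p \<xi> circ (dotp p \<xi> circ a b) c = Dx (\<lambda>s. st (nmul (s * (p - 1)) e1) c)"
      by (subst ab) (simp add: dotp_Dx nmul_mult)
    also have "\<dots> = Dx (\<lambda>s. ev (scaleL (p - 1) Lc) s 1)" by (simp add: Lc(1)[of _ 1] ev_scale)
    also have "\<dots> = nmul (p - 1) (cs (scaleL (p - 1) Lc) 1)"
      by (rule Dx_ev[OF wk_scale[OF okL_wk[OF Lc(2)]]])
    finally show ?thesis by (simp only: cs_scale)
  qed
  finally have Vpart: "D11 (\<lambda>s t. st (V s t) c) = dotp p \<xi> circ (dotp p \<xi> circ a b) c" .
  show ?thesis using main Vpart by (simp add: X_def)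
qed

lemma preLie:
  "dotp p \<xi> circ (dotp p \<xi> circ a b) c - dotp p \<xi> circ a (dotp p \<xi> circ b c)
   = dotp p \<xi> circ (dotp p \<xi> circ b a) c - dotp p \<xi> circ b (dotp p \<xi> circ a c)"
proof -
  define KK where "KK = D11 (\<lambda>s t. st (nmul s a + nmul t b) c)"
  have 1: "dotp p \<xi> circ a (dotp p \<xi> circ b c) = KK + dotp p \<xi> circ (dotp p \<xi> circ a b) c"
    using K[of a b c] M[of a b c] by (simp add: KK_def)
  have sw: "D11 (\<lambda>s t. st (nmul s b + nmul t a) c) = KK"
  proof -
    have "D11 (\<lambda>s t. st (nmul s b + nmul t a) c) = D11 (\<lambda>s t. (\<lambda>s t. st (nmul s a + nmul t b) c) t s)"
      by (simp add: add.commute)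
    also have "\<dots> = KK" unfolding KK_def by (rule D11_swap)
    finally show ?thesis .
  qed
  have 2: "dotp p \<xi> circ b (dotp p \<xi> circ a c) = KK + dotp p \<xi> circ (dotp p \<xi> circ b a) c"
    using K[of b a c] M[of b a c] sw by simp
  show ?thesis using 1 2 by (simp add: algebra_simps)
qed

end

theorem theorem5:
  fixes circ :: "'a::{ab_group_add, finite} \<Rightarrow> 'a \<Rightarrow> 'a"
    and p n k \<gamma> \<xi> :: nat
  assumes "prime p" and "p > 2"
    and "brace circ"
    and "strongly_nilpotent circ"
    and "card (UNIV :: 'a set) = p ^ n"
    and "nilpotency_index circ k"
    and "k < p" and "n + 1 < p"
    and "residue_primroot (p ^ p) \<gamma>"
    and "\<xi> = \<gamma> ^ (p ^ (p - 1))"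
  shows "\<forall>a b c.
    dotp p \<xi> circ (dotp p \<xi> circ a b) c
      - dotp p \<xi> circ a (dotp p \<xi> circ b c)
    = dotp p \<xi> circ (dotp p \<xi> circ b a) c
      - dotp p \<xi> circ b (dotp p \<xi> circ a c)"
proof -
  have nilk: "sp circ k = {0}" using assms(6) by (simp add: nilpotency_index_def)
  have xp: "[\<xi> ^ (p - 1) = 1] (mod p ^ p)"
    by (rule xi_pow[OF assms(1,2,9,10)])
  have xn: "\<And>e. 0 < e \<Longrightarrow> e < p - 1 \<Longrightarrow> \<not> [\<xi> ^ e = 1] (mod p)"
    by (rule xi_ne[OF assms(1,2,9,10)])
  have dv: "p ^ n dvd p ^ p" using assms(8) by (intro le_imp_power_dvd) simp
  interpret F: FIN circ k "p ^ n" p \<xi>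
  proof (unfold_locales)
    show "brace circ" by (rule assms(3))
    show "sp circ k = {0}" by (rule nilk)
    show "nmul (p ^ n) x = 0" for x :: 'a
      using nmul_card_zero[of x] assms(5) by simp
    show "0 < p ^ n" using assms(1) by (simp add: prime_gt_0_nat)
    show "coprime (fact j) (p ^ n)" if "j < k" for j
    proof -
      have "\<not> p dvd fact j" using that assms(1,7) by (simp add: prime_dvd_fact_iff)
      then have "coprime p (fact j)" by (rule prime_imp_coprime[OF assms(1)])
      then show ?thesis by (simp add: coprime_commute)
    qed
    show "prime p" by (rule assms(1))
    show "2 < p" by (rule assms(2))
    show "k < p" by (rule assms(7))
    show "[(\<Sum>i = 0..p - 2. \<xi> ^ (p - 1 - i) * (\<xi> ^ i) ^ \<alpha>) = (if \<alpha> = 1 then p - 1 else 0)] (mod p ^ n)"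
      if "\<alpha> \<le> p - 2" for \<alpha>
      using cong_dvd_modulus_nat[OF SL[OF assms(1,2) xp xn that] dv] .
  qed
  show ?thesis using F.preLie by blast
qed


end
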